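(* For any $0<p<\frac{1}{2}$ and any confidence threshold $0<\delta<\frac{1}{2}$, there exists an adaptive Las Vegas noisy binary search algorithm for a linear order of $n$ elements that, for every (adversarially chosen) target, after an expected number of $$\frac{1}{I(p)}\left(\log_2 n+\mathcal{O}(\log\log n)+\mathcal{O}(\log\delta^{-1})\right)$$ queries returns the target correctly with probability at least $1-\delta$.
   Context: Noisy binary search model: the search space is a linear order $\{1,\dots,n\}$ containing an unknown target $v^*$, fixed in advance by an adversary who knows the algorithm. In each step the algorithm chooses an element $q$ and asks a comparison query, whose correct answer is "$<$" if $v^*<q$ and "$>$" otherwise. Each answer is, independently, incorrect (the opposite answer) with probability $p$ and correct with probability $1-p$. The algorithm is adaptive and may use randomness; the number of queries is random and the bound is on its expectation. $H(p)=-p\log_2 p-(1-p)\log_2(1-p)$ and $I(p)=1-H(p)$. *)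

theory Defs
  imports "HOL-Analysis.Analysis"
begin

definition bin_entropy :: "real \<Rightarrow> real" where
  "bin_entropy p = - p * log 2 p - (1 - p) * log 2 (1 - p)"

definition capacity :: "real \<Rightarrow> real" where
  "capacity p = 1 - bin_entropy p"

text \<open>An adaptive randomized algorithm is a strategy mapping the history of
  observed bits (noisy query answers and fair coin flips) to the next action.
  Answer bit True encodes the answer "<" (i.e. the target is below q).\<close>
datatype action = Query nat | Coin | Return nat

definition step_prob :: "real \<Rightarrow> nat \<Rightarrow> action \<Rightarrow> bool \<Rightarrow> real" where
  "step_prob p v a b = (case a of
      Query q \<Rightarrow> (if b = (v < q) then 1 - p else p)
    | Coin \<Rightarrow> 1 / 2
    | Return u \<Rightarrow> 0)"

text \<open>Probability that the run of strategy s with target v produces history h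
  (histories passing through a Return have probability 0).\<close>
definition reach_prob :: "real \<Rightarrow> (bool list \<Rightarrow> action) \<Rightarrow> nat \<Rightarrow> bool list \<Rightarrow> real" where
  "reach_prob p s v h = (\<Prod>i<length h. step_prob p v (s (take i h)) (h ! i))"

definition is_query :: "action \<Rightarrow> bool" where
  "is_query a = (\<exists>q. a = Query q)"

definition is_return :: "action \<Rightarrow> bool" where
  "is_return a = (\<exists>u. a = Return u)"

definition expected_queries :: "real \<Rightarrow> (bool list \<Rightarrow> action) \<Rightarrow> nat \<Rightarrow> ennreal" where
  "expected_queries p s v =
     (\<Sum>k. \<Sum>h\<in>{h::bool list. length h = k}.
        (if is_query (s h) then ennreal (reach_prob p s v h) else 0))"

definition halt_prob :: "real \<Rightarrow> (bool list \<Rightarrow> action) \<Rightarrow> nat \<Rightarrow> ennreal" where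
  "halt_prob p s v =
     (\<Sum>k. \<Sum>h\<in>{h::bool list. length h = k}.
        (if is_return (s h) then ennreal (reach_prob p s v h) else 0))"

definition success_prob :: "real \<Rightarrow> (bool list \<Rightarrow> action) \<Rightarrow> nat \<Rightarrow> ennreal" where
  "success_prob p s v =
     (\<Sum>k. \<Sum>h\<in>{h::bool list. length h = k}.
        (if s h = Return v then ennreal (reach_prob p s v h) else 0))"

end

theory Submission
  imports Defs
begin

lemma finite_len: "finite {h::bool list. length h = n}"
  using finite_lists_length_eq[of "UNIV::bool set" n] by simp

lemma card_len: "card {h::bool list. length h = n} = 2 ^ n"
  using card_lists_length_eq[of "UNIV::bool set" n] by simp

lemma reach_snoc:
  "reach_prob p s v (h @ [b]) = reach_prob p s v h * step_prob p v (s h) b"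
  unfolding reach_prob_def
  by (simp add: lessThan_Suc nth_append)

lemma reach_Nil: "reach_prob p s v [] = 1"
  by (simp add: reach_prob_def)

lemma len_Suc_eq:
  "{h::bool list. length h = Suc n} =
     (\<lambda>h. h @ [True]) ` {h. length h = n} \<union> (\<lambda>h. h @ [False]) ` {h. length h = n}"
proof (rule set_eqI, rule iffI)
  fix x :: "bool list" assume "x \<in> {h. length h = Suc n}"
  then have "x = butlast x @ [last x]" "length (butlast x) = n"
    by (auto intro!: append_butlast_last_id[symmetric])
  then show "x \<in> (\<lambda>h. h @ [True]) ` {h. length h = n} \<union> (\<lambda>h. h @ [False]) ` {h. length h = n}"
  proof (cases "last x")
    case True
    then have "x \<in> (\<lambda>h. h @ [True]) ` {h. length h = n}"
      using \<open>x = butlast x @ [last x]\<close> \<open>length (butlast x) = n\<close> by (intro rev_image_eqI[of "butlast x"]) auto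
    then show ?thesis by (rule UnI1)
  next
    case False
    then have "x \<in> (\<lambda>h. h @ [False]) ` {h. length h = n}"
      using \<open>x = butlast x @ [last x]\<close> \<open>length (butlast x) = n\<close> by (intro rev_image_eqI[of "butlast x"]) auto
    then show ?thesis by (rule UnI2)
  qed
qed auto

lemma sum_len_Suc:
  "(\<Sum>h\<in>{h::bool list. length h = Suc n}. f h) =
     (\<Sum>h\<in>{h. length h = n}. f (h @ [True]) + f (h @ [False]))"
proof -
  have d: "(\<lambda>h. h @ [True]) ` {h::bool list. length h = n} \<inter> (\<lambda>h. h @ [False]) ` {h. length h = n} = {}"
    by auto
  have i1: "inj_on (\<lambda>h::bool list. h @ [True]) A" for A by (auto simp: inj_on_def)
  have i2: "inj_on (\<lambda>h::bool list. h @ [False]) A" for A by (auto simp: inj_on_def)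
  show ?thesis
    unfolding len_Suc_eq
    by (subst sum.union_disjoint) (auto simp: finite_len d sum.reindex[OF i1] sum.reindex[OF i2] sum.distrib)
qed

lemma step_prob_nonneg: "0 \<le> p \<Longrightarrow> p \<le> 1 \<Longrightarrow> 0 \<le> step_prob p v a b"
  by (cases a) (auto simp: step_prob_def)

lemma reach_nonneg: "0 \<le> p \<Longrightarrow> p \<le> 1 \<Longrightarrow> 0 \<le> reach_prob p s v h"
  unfolding reach_prob_def by (intro prod_nonneg) (auto intro: step_prob_nonneg)

lemma step_prob_sum:
  "step_prob p v a True + step_prob p v a False = (if is_return a then 0 else 1)"
  by (cases a) (auto simp: step_prob_def is_return_def)

lemma potential_bound:
  assumes p: "0 \<le> p" "p \<le> 1"
    and nn: "\<And>h. 0 \<le> \<Phi> h"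
    and dr: "\<And>h. c h + step_prob p v (s h) True * \<Phi> (h @ [True])
                  + step_prob p v (s h) False * \<Phi> (h @ [False]) \<le> \<Phi> h"
  shows "(\<Sum>N<M. \<Sum>h\<in>{h. length h = N}. reach_prob p s v h * c h)
          + (\<Sum>h\<in>{h. length h = M}. reach_prob p s v h * \<Phi> h) \<le> \<Phi> []"
proof (induction M)
  case 0
  then show ?case by (simp add: reach_Nil)
next
  case (Suc M)
  have "(\<Sum>h\<in>{h. length h = Suc M}. reach_prob p s v h * \<Phi> h)
      = (\<Sum>h\<in>{h. length h = M}. reach_prob p s v h * (step_prob p v (s h) True * \<Phi> (h @ [True])
                  + step_prob p v (s h) False * \<Phi> (h @ [False])))"
    by (simp add: sum_len_Suc reach_snoc algebra_simps)
  also have "\<dots> \<le> (\<Sum>h\<in>{h. length h = M}. reach_prob p s v h * (\<Phi> h - c h))"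
    by (intro sum_mono mult_left_mono) (use dr reach_nonneg[OF p] in \<open>auto simp: algebra_simps\<close>)
  finally show ?case using Suc
    by (simp add: algebra_simps sum_subtractf sum.distrib)
qed

definition lvA where "lvA p s v N = (\<Sum>h\<in>{h::bool list. length h = N}. reach_prob p s v h)"
definition lvR where "lvR p s v N = (\<Sum>h\<in>{h::bool list. length h = N}. if is_return (s h) then reach_prob p s v h else 0)"
definition lvNR where "lvNR p s v N = (\<Sum>h\<in>{h::bool list. length h = N}. if is_return (s h) then 0 else reach_prob p s v h)"

lemma lvA_0: "lvA p s v 0 = 1"
  by (simp add: lvA_def reach_Nil)

lemma lvA_Suc: "lvA p s v (Suc N) = lvNR p s v N"
  unfolding lvA_def lvNR_def sum_len_Suc reach_snoc
  by (intro sum.cong refl) (simp add: distrib_left[symmetric] step_prob_sum)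

lemma lvA_split: "lvA p s v N = lvNR p s v N + lvR p s v N"
  unfolding lvA_def lvNR_def lvR_def sum.distrib[symmetric]
  by (intro sum.cong) auto

lemma lvR_partial: "(\<Sum>N<M. lvR p s v N) = 1 - lvA p s v M"
proof (induction M)
  case 0 then show ?case by (simp add: lvA_0)
next
  case (Suc M) then show ?case using lvA_split[of p s v M] lvA_Suc[of p s v M] by simp
qed

lemma lvR_nonneg: "0 \<le> p \<Longrightarrow> p \<le> 1 \<Longrightarrow> 0 \<le> lvR p s v N"
  unfolding lvR_def by (intro sum_nonneg) (auto intro: reach_nonneg)

lemma lvNR_nonneg: "0 \<le> p \<Longrightarrow> p \<le> 1 \<Longrightarrow> 0 \<le> lvNR p s v N"
  unfolding lvNR_def by (intro sum_nonneg) (auto intro: reach_nonneg)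

lemma lvA_nonneg: "0 \<le> p \<Longrightarrow> p \<le> 1 \<Longrightarrow> 0 \<le> lvA p s v N"
  unfolding lvA_def by (intro sum_nonneg) (auto intro: reach_nonneg)

lemma lvR_partial_le: "0 \<le> p \<Longrightarrow> p \<le> 1 \<Longrightarrow> (\<Sum>N<M. lvR p s v N) \<le> 1"
  using lvR_partial[of p s v M] lvA_nonneg[of p s v M] by simp

lemma ennreal_if_sum:
  assumes "\<And>h. 0 \<le> f h"
  shows "(\<Sum>h\<in>A. if P h then ennreal (f h) else 0) = ennreal (\<Sum>h\<in>A. if P h then f h else 0)"
proof -
  have "(\<Sum>h\<in>A. if P h then ennreal (f h) else 0) = (\<Sum>h\<in>A. ennreal (if P h then f h else 0))"
    by (intro sum.cong) auto
  also have "\<dots> = ennreal (\<Sum>h\<in>A. if P h then f h else 0)"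
    by (rule sum_ennreal) (use assms in auto)
  finally show ?thesis .
qed

lemma halt_prob_lv: "0 \<le> p \<Longrightarrow> p \<le> 1 \<Longrightarrow> halt_prob p s v = (\<Sum>N. ennreal (lvR p s v N))"
  unfolding halt_prob_def lvR_def
  by (subst ennreal_if_sum) (auto intro: reach_nonneg)

lemma halting:
  assumes p: "0 \<le> p" "p \<le> 1"
    and B: "\<And>M. (\<Sum>N<M. lvNR p s v N) \<le> B"
  shows "halt_prob p s v = 1"
proof -
  have A_dec: "lvA p s v (Suc N) \<le> lvA p s v N" for N
    using lvA_split[of p s v N] lvA_Suc[of p s v N] lvR_nonneg[OF p, of s v N] by simp
  have A_mono: "lvA p s v M \<le> lvA p s v N" if "N \<le> M" for N M
    using that by (induction M) (auto intro: order_trans[OF A_dec] simp: le_Suc_eq)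
  have bnd: "real M * lvA p s v M \<le> B" for M
  proof -
    have "real M * lvA p s v M = (\<Sum>N<M. lvA p s v M)" by simp
    also have "\<dots> \<le> (\<Sum>N<M. lvA p s v (Suc N))"
      by (intro sum_mono A_mono) auto
    also have "\<dots> = (\<Sum>N<M. lvNR p s v N)" by (simp add: lvA_Suc)
    also have "\<dots> \<le> B" by (rule B)
    finally show ?thesis .
  qed
  have lim: "(\<lambda>M. lvA p s v M) \<longlonglongrightarrow> 0"
  proof (rule tendsto_sandwich[of "\<lambda>_. 0" _ _ "\<lambda>M. B / real M"])
    show "\<forall>\<^sub>F n in sequentially. 0 \<le> lvA p s v n" using lvA_nonneg[OF p] by simp
    show "\<forall>\<^sub>F n in sequentially. lvA p s v n \<le> B / real n"
    proof (rule eventually_sequentiallyI[of 1])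
      fix M :: nat assume "1 \<le> M"
      then show "lvA p s v M \<le> B / real M"
        using bnd[of M] by (simp add: field_simps mult.commute)
    qed
  qed (auto intro: lim_const_over_n)
  have "(\<lambda>N. lvA p s v N - lvA p s v (Suc N)) sums (lvA p s v 0 - 0)"
    by (rule telescope_sums'[OF lim])
  then have "(\<lambda>N. lvR p s v N) sums 1"
    using lvA_split lvA_Suc lvA_0 by (simp add: algebra_simps)
  then have "(\<Sum>N. ennreal (lvR p s v N)) = ennreal 1"
    by (subst suminf_ennreal2) (auto intro: lvR_nonneg[OF p] simp: sums_iff)
  then show ?thesis by (simp add: halt_prob_lv[OF p])
qed

lemma expected_bound:
  assumes p: "0 \<le> p" "p \<le> 1"
    and B: "\<And>M. (\<Sum>N<M. \<Sum>h\<in>{h. length h = N}. if is_query (s h) then reach_prob p s v h else 0) \<le> B"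
  shows "expected_queries p s v \<le> ennreal B"
proof -
  have "expected_queries p s v = (\<Sum>N. ennreal (\<Sum>h\<in>{h. length h = N}. if is_query (s h) then reach_prob p s v h else 0))"
    unfolding expected_queries_def by (subst ennreal_if_sum) (auto intro: reach_nonneg[OF p])
  also have "\<dots> \<le> ennreal B"
  proof (subst suminf_eq_SUP, rule SUP_least)
    fix M
    have "(\<Sum>N<M. ennreal (\<Sum>h\<in>{h. length h = N}. if is_query (s h) then reach_prob p s v h else 0))
        = ennreal (\<Sum>N<M. \<Sum>h\<in>{h. length h = N}. if is_query (s h) then reach_prob p s v h else 0)"
      by (rule sum_ennreal) (auto intro!: sum_nonneg reach_nonneg[OF p])
    also have "\<dots> \<le> ennreal B" using B by (rule ennreal_leI)
    finally show "(\<Sum>N<M. ennreal (\<Sum>h\<in>{h. length h = N}. if is_query (s h) then reach_prob p s v h else 0)) \<le> ennreal B" .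
  qed
  finally show ?thesis .
qed

definition lvE where "lvE p s v N = (\<Sum>h\<in>{h::bool list. length h = N}.
    if is_return (s h) \<and> s h \<noteq> Return v then reach_prob p s v h else 0)"

lemma lvE_nonneg: "0 \<le> p \<Longrightarrow> p \<le> 1 \<Longrightarrow> 0 \<le> lvE p s v N"
  unfolding lvE_def by (intro sum_nonneg) (auto intro: reach_nonneg)

lemma success_bound:
  assumes p: "0 \<le> p" "p \<le> 1"
    and H: "halt_prob p s v = 1"
    and B: "\<And>M. (\<Sum>N<M. lvE p s v N) \<le> d"
  shows "ennreal (1 - d) \<le> success_prob p s v"
proof -
  define S where "S N = (\<Sum>h\<in>{h::bool list. length h = N}. if s h = Return v then reach_prob p s v h else 0)" for N
  have SE: "S N + lvE p s v N = lvR p s v N" for N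
    unfolding S_def lvE_def lvR_def sum.distrib[symmetric]
    by (intro sum.cong) (auto simp: is_return_def)
  have S_nn: "0 \<le> S N" for N unfolding S_def by (intro sum_nonneg) (auto intro: reach_nonneg[OF p])
  have H': "(\<Sum>N. ennreal (lvR p s v N)) = 1" using H halt_prob_lv[OF p] by simp
  have sR: "summable (\<lambda>N. lvR p s v N)"
    by (rule summable_suminf_not_top) (use H' lvR_nonneg[OF p] in auto)
  have R1: "(\<Sum>N. lvR p s v N) = 1"
    using H' suminf_ennreal2[of "\<lambda>N. lvR p s v N", OF lvR_nonneg[OF p] sR] by simp
  have sE: "summable (\<lambda>N. lvE p s v N)"
    by (rule summable_comparison_test'[OF sR, of 0]) (use SE S_nn lvE_nonneg[OF p] in \<open>smt (verit) real_norm_def\<close>)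
  have sS: "summable S"
  proof -
    have "summable (\<lambda>N. lvR p s v N - lvE p s v N)" using sR sE by (rule summable_diff)
    moreover have "(\<lambda>N. lvR p s v N - lvE p s v N) = S" using SE by (auto simp: algebra_simps)
    ultimately show ?thesis by simp
  qed
  have SS: "S = (\<lambda>N. lvR p s v N - lvE p s v N)" using SE by (auto simp: algebra_simps)
  have "suminf S = (\<Sum>N. lvR p s v N) - (\<Sum>N. lvE p s v N)"
    unfolding SS using suminf_diff[OF sR sE] by simp
  moreover have "(\<Sum>N. lvE p s v N) \<le> d" by (rule suminf_le_const[OF sE B])
  ultimately have Sg: "1 - d \<le> suminf S" using R1 by simp
  have "success_prob p s v = (\<Sum>N. ennreal (S N))"
    unfolding success_prob_def S_def by (subst ennreal_if_sum) (auto intro: reach_nonneg[OF p])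
  also have "\<dots> = ennreal (suminf S)" by (rule suminf_ennreal2[OF S_nn sS])
  finally show ?thesis using Sg by (simp add: ennreal_leI)
qed

definition bitval :: "bool list \<Rightarrow> nat" where
  "bitval bs = foldl (\<lambda>a b. 2 * a + (if b then 1 else 0)) 0 bs"

lemma bitval_Nil[simp]: "bitval [] = 0" by (simp add: bitval_def)

lemma bitval_snoc[simp]: "bitval (bs @ [b]) = 2 * bitval bs + (if b then 1 else 0)"
  by (simp add: bitval_def)

lemma bitval_less: "bitval bs < 2 ^ length bs"
  by (induction bs rule: rev_induct) auto

lemma bitval_inj: "length bs = length cs \<Longrightarrow> bitval bs = bitval cs \<Longrightarrow> bs = cs"
proof (induction bs arbitrary: cs rule: rev_induct)
  case Nil then show ?case by simp
next
  case (snoc b bs)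
  then obtain cs' c where cs: "cs = cs' @ [c]" "length cs' = length bs"
    by (metis append_butlast_last_id length_butlast length_greater_0_conv length_append_singleton diff_Suc_1 zero_less_Suc)
  have bc: "b = c" using snoc.prems cs by (auto split: if_splits; presburger)
  have "bitval bs = bitval cs'" using snoc.prems cs bc by (auto split: if_splits)
  then show ?case using snoc.IH cs bc by auto
qed

locale nbs =
  fixes p :: real and k :: nat and D :: nat and eps :: real
  assumes p0: "0 < p" and p1: "p < 1/2" and k1: "1 \<le> k" and D2: "2 \<le> D"
    and e0: "0 < eps" and e1: "eps < 1/2"
begin

definition tot :: "(nat \<Rightarrow> real) \<Rightarrow> real" where
  "tot W = (\<Sum>y\<in>{1..D}. W y)"

definition Lw :: "(nat \<Rightarrow> real) \<Rightarrow> nat \<Rightarrow> real" where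
  "Lw W q = (\<Sum>y\<in>{1..D}. if y < q then W y else 0)"

definition med :: "(nat \<Rightarrow> real) \<Rightarrow> nat" where
  "med W = (LEAST q. tot W \<le> 2 * Lw W (Suc q))"

definition lam :: "(nat \<Rightarrow> real) \<Rightarrow> real" where
  "lam W = (Lw W (med W) + W (med W) - tot W / 2) / W (med W)"

definition qry :: "(nat \<Rightarrow> real) \<Rightarrow> nat \<Rightarrow> nat" where
  "qry W c = (if real c < 2 ^ k * lam W then med W else Suc (med W))"

definition upd :: "(nat \<Rightarrow> real) \<Rightarrow> nat \<Rightarrow> bool \<Rightarrow> nat \<Rightarrow> real" where
  "upd W q b = (\<lambda>y. W y * (if b = (y < q) then 1 - p else p))"

definition coins :: "bool list \<Rightarrow> nat \<Rightarrow> nat" where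
  "coins g t = bitval (take k (drop (t * (k + 1)) g))"

primrec Wt :: "bool list \<Rightarrow> nat \<Rightarrow> nat \<Rightarrow> real" where
  "Wt g 0 = (\<lambda>_. 1)"
| "Wt g (Suc t) = upd (Wt g t) (qry (Wt g t) (coins g t)) (g ! (t * (k + 1) + k))"

definition stopc :: "(nat \<Rightarrow> real) \<Rightarrow> bool" where
  "stopc W = (\<exists>u\<in>{1..D}. (1 - eps) * tot W \<le> W u)"

definition amax :: "(nat \<Rightarrow> real) \<Rightarrow> nat" where
  "amax W = (SOME u. u \<in> {1..D} \<and> (1 - eps) * tot W \<le> W u)"

definition V :: "bool list \<Rightarrow> action" where
  "V g = (let t = length g div (k + 1); r = length g mod (k + 1); W = Wt g t in
          if r = 0 \<and> stopc W then Return (amax W)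
          else if r < k then Coin else Query (qry W (coins g t)))"

lemma coins_append: "t * (k + 1) + k \<le> length g \<Longrightarrow> coins (g @ h) t = coins g t"
  unfolding coins_def by (simp add: algebra_simps)

lemma Wt_append: "t * (k + 1) \<le> length g \<Longrightarrow> Wt (g @ h) t = Wt g t"
proof (induction t)
  case 0 then show ?case by simp
next
  case (Suc t)
  have a: "t * (k + 1) \<le> length g" using Suc.prems by simp
  have b: "t * (k + 1) + k < length g" using Suc.prems by simp
  have c: "t * (k + 1) + k \<le> length g" using Suc.prems by simp
  show ?case using Suc.IH[OF a] coins_append[OF c] b by (simp add: nth_append)
qed

lemma Wt_pos: "0 < Wt g t y"
  using p0 p1 by (induction t) (auto simp: upd_def)

lemma len_split: "length g = (length g div (k + 1)) * (k + 1) + length g mod (k + 1)"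
  by (rule div_mult_mod_eq[symmetric])

lemma divmod_eqI:
  fixes m n t r :: nat
  assumes "m = t * n + r" "r < n"
  shows "m div n = t" "m mod n = r"
  using assms by simp_all

lemma child_lt:
  assumes "length g mod (k + 1) < k"
  shows "length (g @ [b]) div (k + 1) = length g div (k + 1)"
    and "length (g @ [b]) mod (k + 1) = Suc (length g mod (k + 1))"
proof -
  have e: "length (g @ [b]) = (length g div (k+1)) * (k+1) + Suc (length g mod (k+1))"
    using len_split[of g] by simp
  show "length (g @ [b]) div (k + 1) = length g div (k + 1)"
    and "length (g @ [b]) mod (k + 1) = Suc (length g mod (k + 1))"
    using divmod_eqI[OF e] assms by auto
qed

lemma child_eq:
  assumes "length g mod (k + 1) = k"
  shows "length (g @ [b]) div (k + 1) = Suc (length g div (k + 1))"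
    and "length (g @ [b]) mod (k + 1) = 0"
proof -
  have e: "length (g @ [b]) = Suc (length g div (k+1)) * (k+1) + 0"
    using len_split[of g] assms by simp
  show "length (g @ [b]) div (k + 1) = Suc (length g div (k + 1))"
    and "length (g @ [b]) mod (k + 1) = 0"
    using divmod_eqI[OF e] by auto
qed

lemma Wt_child_lt:
  assumes "length g mod (k + 1) < k"
  shows "Wt (g @ [b]) (length g div (k + 1)) = Wt g (length g div (k + 1))"
  by (rule Wt_append) (metis len_split le_add1)

lemma Wt_child_eq:
  assumes "length g mod (k + 1) = k"
  shows "Wt (g @ [b]) (Suc (length g div (k + 1))) =
         upd (Wt g (length g div (k + 1))) (qry (Wt g (length g div (k + 1))) (coins g (length g div (k + 1)))) b"
proof -
  let ?t = "length g div (k + 1)"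
  have L: "length g = ?t * (k + 1) + k"
  proof -
    have "length g = ?t * (k + 1) + length g mod (k + 1)" by (rule len_split)
    then show ?thesis unfolding assms .
  qed
  have "coins (g @ [b]) ?t = coins g ?t" by (rule coins_append) (use L in simp)
  moreover have "Wt (g @ [b]) ?t = Wt g ?t" by (rule Wt_append) (use L in simp)
  moreover have "(g @ [b]) ! (?t * (k + 1) + k) = b" using L by (simp add: nth_append)
  ultimately show ?thesis by simp
qed

definition cf :: "action \<Rightarrow> real" where
  "cf a = (case a of Query _ \<Rightarrow> 1 | Coin \<Rightarrow> 1/2 | Return _ \<Rightarrow> 0)"

definition Cf :: "bool list \<Rightarrow> real" where
  "Cf g = (\<Prod>i<length g. cf (V (take i g)))"

lemma Cf_snoc: "Cf (g @ [b]) = Cf g * cf (V g)"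
  unfolding Cf_def by (simp add: lessThan_Suc)

lemma V_cases:
  "V g = Coin \<Longrightarrow> length g mod (k + 1) < k"
  "V g = Query q \<Longrightarrow> length g mod (k + 1) = k \<and> q = qry (Wt g (length g div (k+1))) (coins g (length g div (k+1)))"
  "V g = Return u \<Longrightarrow> length g mod (k + 1) = 0 \<and> stopc (Wt g (length g div (k+1))) \<and> u = amax (Wt g (length g div (k+1)))"
proof -
  have lt: "length g mod (k + 1) < k + 1" by simp
  show "V g = Coin \<Longrightarrow> length g mod (k + 1) < k"
    unfolding V_def Let_def by (auto split: if_splits)
  show "V g = Query q \<Longrightarrow> length g mod (k + 1) = k \<and> q = qry (Wt g (length g div (k+1))) (coins g (length g div (k+1)))"
  proof -
    assume a: "V g = Query q"
    then have "\<not> length g mod (k + 1) < k" "q = qry (Wt g (length g div (k+1))) (coins g (length g div (k+1)))"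
      unfolding V_def Let_def by (auto split: if_splits)
    moreover from this(1) have "length g mod (k + 1) = k" using lt by linarith
    ultimately show "length g mod (k + 1) = k \<and> q = qry (Wt g (length g div (k+1))) (coins g (length g div (k+1)))"
      by simp
  qed
  show "V g = Return u \<Longrightarrow> length g mod (k + 1) = 0 \<and> stopc (Wt g (length g div (k+1))) \<and> u = amax (Wt g (length g div (k+1)))"
    unfolding V_def Let_def by (auto split: if_splits)
qed

lemma reach_V: "reach_prob p V x g = Cf g * Wt g (length g div (k + 1)) x"
proof (induction g rule: rev_induct)
  case Nil then show ?case by (simp add: reach_Nil Cf_def)
next
  case (snoc b g)
  let ?t = "length g div (k + 1)"
  show ?case
  proof (cases "V g")
    case (Query q)
    note c = V_cases(2)[OF Query]
    show ?thesis
      using snoc.IH c Wt_child_eq[of g b] child_eq[of g b]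
      by (simp add: reach_snoc Cf_snoc Query cf_def step_prob_def upd_def)
  next
    case Coin
    note c = V_cases(1)[OF Coin]
    show ?thesis
      using snoc.IH c Wt_child_lt[OF c, of b] child_lt[OF c, of b]
      by (simp add: reach_snoc Cf_snoc Coin cf_def step_prob_def)
  next
    case (Return u)
    show ?thesis by (simp add: reach_snoc Cf_snoc Return cf_def step_prob_def)
  qed
qed

lemma Cf_nonneg: "0 \<le> Cf g"
  unfolding Cf_def by (intro prod_nonneg) (auto simp: cf_def split: action.split)

end

lemma capacity_eq: "0 < p \<Longrightarrow> p < 1 \<Longrightarrow>
   capacity p = 1 + (p * ln p + (1 - p) * ln (1 - p)) / ln 2"
  unfolding capacity_def bin_entropy_def log_def by (simp add: field_simps)

lemma key_ineq:
  fixes p u :: real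
  assumes p: "0 < p" "p < 1/2" and u: "0 \<le> u" "u \<le> 1"
  shows "(1 - p) * log 2 (1 - u * (1 - 2*p) / (1 - p)) + p * log 2 (1 + u * (1 - 2*p) / p)
         \<le> - capacity p + (1 - 2*p)^2 * (1 - 2*u) / ln 2"
proof -
  define a where "a = 1 - u * (1 - 2*p) / (1 - p)"
  define b where "b = 1 + u * (1 - 2*p) / p"
  have a_eq: "a = (1 - p - u * (1 - 2*p)) / (1 - p)" using p by (simp add: a_def field_simps)
  have apos: "0 < a"
  proof -
    have "u * (1 - 2*p) \<le> 1 - 2*p" using u p by (simp add: mult_le_one mult_right_le_one_le)
    then have "0 < 1 - p - u * (1 - 2*p)" using p by linarith
    then show ?thesis unfolding a_eq using p by simp
  qed
  have "0 \<le> u * (1 - 2*p) / p" using p u by simp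
  then have bpos: "0 < b" by (simp add: b_def)
  have la: "ln a \<le> - ln (2 * (1 - p)) + (2 * (1 - p) * a - 1)"
  proof -
    have "ln (2 * (1 - p) * a) \<le> 2 * (1 - p) * a - 1" by (rule ln_le_minus_one) (use apos p in simp)
    moreover have "ln (2 * (1 - p) * a) = ln (2 * (1 - p)) + ln a" by (rule ln_mult_pos) (use apos p in auto)
    ultimately show ?thesis by simp
  qed
  have lb: "ln b \<le> - ln (2 * p) + (2 * p * b - 1)"
  proof -
    have "ln (2 * p * b) \<le> 2 * p * b - 1" by (rule ln_le_minus_one) (use bpos p in simp)
    moreover have "ln (2 * p * b) = ln (2 * p) + ln b" by (rule ln_mult_pos) (use bpos p in auto)
    ultimately show ?thesis by simp
  qed
  have l2: "ln (2 * (1 - p)) = ln 2 + ln (1 - p)" "ln (2 * p) = ln 2 + ln p"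
    using ln_mult_pos[of 2 "1-p"] ln_mult_pos[of 2 p] p by auto
  have alg: "(1 - p) * (2 * (1 - p) * a - 1) + p * (2 * p * b - 1) = (1 - 2*p)^2 * (1 - 2*u)"
    using p unfolding a_def b_def by (simp add: field_simps power2_eq_square)
  have main: "(1 - p) * ln a + p * ln b \<le> - ln 2 - (p * ln p + (1 - p) * ln (1 - p)) + (1 - 2*p)^2 * (1 - 2*u)"
  proof -
    have "(1 - p) * ln a + p * ln b \<le> (1 - p) * (- ln (2 * (1 - p)) + (2 * (1 - p) * a - 1))
            + p * (- ln (2 * p) + (2 * p * b - 1))"
      using la lb p by (intro add_mono mult_left_mono) auto
    also have "\<dots> = - ln 2 - (p * ln p + (1 - p) * ln (1 - p)) + (1 - 2*p)^2 * (1 - 2*u)"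
      using alg l2 by (simp add: algebra_simps)
    finally show ?thesis .
  qed
  have ln2: "0 < ln (2::real)" by simp
  have "(1 - p) * log 2 a + p * log 2 b = ((1 - p) * ln a + p * ln b) / ln 2"
    by (simp add: log_def field_simps)
  also have "\<dots> \<le> (- ln 2 - (p * ln p + (1 - p) * ln (1 - p)) + (1 - 2*p)^2 * (1 - 2*u)) / ln 2"
    using main ln2 by (simp add: divide_right_mono)
  also have "\<dots> = - capacity p + (1 - 2*p)^2 * (1 - 2*u) / ln 2"
    using capacity_eq[of p] p ln2 by (simp add: field_simps)
  finally show ?thesis unfolding a_def b_def .
qed

lemma ln2_ge_half: "1/2 \<le> ln (2::real)"
proof -
  have "ln (1/2::real) \<le> 1/2 - 1" by (rule ln_le_minus_one) simp
  moreover have "ln (1/2::real) = - ln 2" by (simp add: ln_div)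
  ultimately show ?thesis by simp
qed

lemma count_sum:
  fixes y a b :: real and K :: nat
  assumes "0 \<le> y" "y \<le> real K"
  shows "(\<Sum>c<K. if real c < y then a else b) = real (nat \<lceil>y\<rceil>) * a + real (K - nat \<lceil>y\<rceil>) * b"
    and "real (nat \<lceil>y\<rceil>) \<le> real K" "y \<le> real (nat \<lceil>y\<rceil>)" "real (nat \<lceil>y\<rceil>) < y + 1"
proof -
  define N where "N = nat \<lceil>y\<rceil>"
  have NK: "N \<le> K" unfolding N_def using assms
    by (metis ceiling_mono ceiling_of_nat nat_int nat_mono)
  have iff: "real c < y \<longleftrightarrow> c < N" for c :: nat
    unfolding N_def using less_ceiling_iff[of "int c" y] by (simp add: zless_nat_eq_int_zless)
  have "(\<Sum>c<K. if real c < y then a else b) = (\<Sum>c<K. if c < N then a else b)"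
    using iff by simp
  also have "\<dots> = (\<Sum>c\<in>{..<K} \<inter> {c. c < N}. a) + (\<Sum>c\<in>{..<K} \<inter> - {c. c < N}. b)"
    by (rule sum.If_cases) simp
  also have "{..<K} \<inter> {c. c < N} = {..<N}" using NK by auto
  also have "{..<K} \<inter> - {c. c < N} = {N..<K}" by auto
  finally show "(\<Sum>c<K. if real c < y then a else b) = real (nat \<lceil>y\<rceil>) * a + real (K - nat \<lceil>y\<rceil>) * b"
    unfolding N_def by simp
  show "real (nat \<lceil>y\<rceil>) \<le> real K" using NK N_def by simp
  show "y \<le> real (nat \<lceil>y\<rceil>)" using assms(1) by linarith
  show "real (nat \<lceil>y\<rceil>) < y + 1" using assms(1) by linarith
qed

context nbs begin

definition pos :: "(nat \<Rightarrow> real) \<Rightarrow> bool" where "pos W = (\<forall>y. 0 < W y)"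

lemma pos_Wt: "pos (Wt g t)" using Wt_pos by (simp add: pos_def)

lemma tot_pos: "pos W \<Longrightarrow> 0 < tot W"
  unfolding tot_def pos_def using D2 by (intro sum_pos) auto

lemma Lw_0: "Lw W 0 = 0" by (simp add: Lw_def)

lemma Lw_big: "D < q \<Longrightarrow> Lw W q = tot W"
  unfolding Lw_def tot_def by (intro sum.cong) auto

lemma Lw_Suc: "Lw W (Suc q) = Lw W q + (if q \<in> {1..D} then W q else 0)"
proof -
  have "Lw W (Suc q) = (\<Sum>y\<in>{1..D}. (if y < q then W y else 0) + (if y = q then W y else 0))"
    unfolding Lw_def by (intro sum.cong) auto
  also have "\<dots> = Lw W q + (\<Sum>y\<in>{1..D}. if y = q then W y else 0)"
    unfolding Lw_def by (simp add: sum.distrib)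
  also have "(\<Sum>y\<in>{1..D}. if y = q then W y else 0) = (if q \<in> {1..D} then W q else 0)"
    by (simp add: sum.delta')
  finally show ?thesis .
qed

definition Rw :: "(nat \<Rightarrow> real) \<Rightarrow> nat \<Rightarrow> real" where
  "Rw W q = (\<Sum>y\<in>{1..D}. if y < q then 0 else W y)"

lemma Lw_Rw: "Lw W q + Rw W q = tot W"
  unfolding Lw_def Rw_def tot_def sum.distrib[symmetric] by (intro sum.cong) auto

lemma Lw_ge: "pos W \<Longrightarrow> x \<in> {1..D} \<Longrightarrow> x < q \<Longrightarrow> W x \<le> Lw W q"
  unfolding Lw_def pos_def
  using member_le_sum[of x "{1..D}" "\<lambda>y. if y < q then W y else 0"]
  by (simp add: less_imp_le)

lemma Rw_ge: "pos W \<Longrightarrow> x \<in> {1..D} \<Longrightarrow> \<not> x < q \<Longrightarrow> W x \<le> Rw W q"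
  unfolding Rw_def pos_def
  using member_le_sum[of x "{1..D}" "\<lambda>y. if y < q then 0 else W y"]
  by (simp add: less_imp_le)

lemma Lw_nonneg: "pos W \<Longrightarrow> 0 \<le> Lw W q"
  unfolding Lw_def pos_def by (intro sum_nonneg) (auto simp: less_imp_le)

lemma Rw_nonneg: "pos W \<Longrightarrow> 0 \<le> Rw W q"
  unfolding Rw_def pos_def by (intro sum_nonneg) (auto simp: less_imp_le)

lemma med_props:
  assumes "pos W"
  shows "tot W \<le> 2 * Lw W (Suc (med W))" "2 * Lw W (med W) < tot W" "med W \<in> {1..D}"
proof -
  have Z: "0 < tot W" by (rule tot_pos[OF assms])
  have ex: "tot W \<le> 2 * Lw W (Suc D)" using Lw_big[of "Suc D" W] Z by simp
  show 1: "tot W \<le> 2 * Lw W (Suc (med W))" unfolding med_def by (rule LeastI[of "\<lambda>q. tot W \<le> 2 * Lw W (Suc q)" D, OF ex])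
  have le: "med W \<le> D" unfolding med_def by (rule Least_le[of "\<lambda>q. tot W \<le> 2 * Lw W (Suc q)" D, OF ex])
  show 2: "2 * Lw W (med W) < tot W"
  proof (cases "med W")
    case 0 then show ?thesis using Z by (simp add: Lw_0)
  next
    case (Suc m)
    have "\<not> tot W \<le> 2 * Lw W (Suc m)"
      using not_less_Least[of m "\<lambda>q. tot W \<le> 2 * Lw W (Suc q)"] Suc unfolding med_def by simp
    then show ?thesis using Suc by simp
  qed
  have "med W \<noteq> 0"
  proof
    assume "med W = 0"
    then have "tot W \<le> 2 * Lw W 1" using 1 by simp
    moreover have "Lw W 1 = 0" using Lw_Suc[of W 0] by (simp add: Lw_0)
    ultimately show False using Z by simp
  qed
  then show "med W \<in> {1..D}" using le by simp
qed

definition opp :: "(nat \<Rightarrow> real) \<Rightarrow> nat \<Rightarrow> nat \<Rightarrow> real" where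
  "opp W x q = (if x < q then Rw W q else Lw W q)"

lemma opp_bounds:
  assumes "pos W" "x \<in> {1..D}"
  shows "0 \<le> opp W x q" "opp W x q \<le> tot W - W x"
  using Lw_ge[OF assms, of q] Rw_ge[OF assms, of q] Lw_nonneg[OF assms(1), of q] Rw_nonneg[OF assms(1), of q]
    Lw_Rw[of W q]
  by (auto simp: opp_def)

lemma lam_props:
  assumes "pos W"
  shows "0 \<le> lam W" "lam W \<le> 1"
proof -
  have M: "0 < W (med W)" using assms by (simp add: pos_def)
  have L: "Lw W (Suc (med W)) = Lw W (med W) + W (med W)"
    using Lw_Suc[of W "med W"] med_props(3)[OF assms] by simp
  show "0 \<le> lam W" unfolding lam_def using med_props(1)[OF assms] L M by simp
  show "lam W \<le> 1" unfolding lam_def using med_props(2)[OF assms] L M by simp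
qed

lemma lam_mix:
  assumes "pos W" "x \<in> {1..D}"
  shows "(tot W - W x) / 2 \<le> lam W * opp W x (med W) + (1 - lam W) * opp W x (Suc (med W))"
proof -
  define m where "m = med W"
  define A where "A = Lw W m"
  define M where "M = W m"
  define Z where "Z = tot W"
  have Mp: "0 < M" using assms by (simp add: pos_def M_def)
  have mD: "m \<in> {1..D}" using med_props(3)[OF assms(1)] by (simp add: m_def)
  have LS: "Lw W (Suc m) = A + M" using Lw_Suc[of W m] mD by (simp add: A_def M_def)
  have RS: "Rw W (Suc m) = Z - A - M" "Rw W m = Z - A" using Lw_Rw[of W m] Lw_Rw[of W "Suc m"] LS
    by (simp_all add: A_def Z_def)
  have lamM: "lam W * M = A + M - Z / 2" unfolding lam_def using Mp by (simp add: A_def M_def Z_def m_def)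
  consider "x < m" | "m < x" | "x = m" by linarith
  then show ?thesis
  proof cases
    case 1
    then have "opp W x m = Z - A" "opp W x (Suc m) = Z - A - M" using RS by (auto simp: opp_def)
    moreover have "lam W * (Z - A) + (1 - lam W) * (Z - A - M) = Z / 2"
      using lamM by (simp add: algebra_simps)
    moreover have "0 < W x" using assms by (simp add: pos_def)
    ultimately show ?thesis by (simp add: m_def Z_def)
  next
    case 2
    then have "opp W x m = A" "opp W x (Suc m) = A + M" using LS by (auto simp: opp_def A_def)
    moreover have "lam W * A + (1 - lam W) * (A + M) = Z / 2"
      using lamM by (simp add: algebra_simps)
    moreover have "0 < W x" using assms by (simp add: pos_def)
    ultimately show ?thesis by (simp add: m_def Z_def)
  next
    case 3
    then have o: "opp W x m = A" "opp W x (Suc m) = Z - A - M" using RS by (auto simp: opp_def A_def)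
    have "M * ((lam W * A + (1 - lam W) * (Z - A - M)) - (Z - M) / 2)
        = (lam W * M) * A + (M - lam W * M) * (Z - A - M) - M * (Z - M) / 2"
      by (simp add: algebra_simps)
    also have "\<dots> = 2 * (Z / 2 - A - M / 2)^2"
      unfolding lamM power2_eq_square by (simp add: field_simps)
    finally have "0 \<le> M * ((lam W * A + (1 - lam W) * (Z - A - M)) - (Z - M) / 2)" by simp
    then have "(Z - M) / 2 \<le> lam W * A + (1 - lam W) * (Z - A - M)"
      using Mp by (simp add: zero_le_mult_iff)
    then show ?thesis using o 3 by (simp add: m_def M_def Z_def)
  qed
qed

end

context nbs begin

lemma avg_opp:
  assumes "pos W" "x \<in> {1..D}"
  shows "(tot W - W x) * (1/2 - 1/2^k) \<le> (\<Sum>c<2^k. opp W x (qry W c)) / 2^k"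
proof -
  define K :: nat where "K = 2^k"
  have K0: "0 < real K" by (simp add: K_def)
  define y where "y = real K * lam W"
  have y: "0 \<le> y" "y \<le> real K" using lam_props[OF assms(1)] K0 by (auto simp: y_def mult_le_cancel_left1)
  define N where "N = nat \<lceil>y\<rceil>"
  define S1 where "S1 = opp W x (med W)"
  define S2 where "S2 = opp W x (Suc (med W))"
  define Z where "Z = tot W - W x"
  note cs = count_sum(1)[OF y, of S1 S2] count_sum(2-4)[OF y]
  have qe: "opp W x (qry W c) = (if real c < y then S1 else S2)" for c
    by (simp add: qry_def y_def K_def S1_def S2_def)
  have sum: "(\<Sum>c<K. opp W x (qry W c)) = real N * S1 + real (K - N) * S2"
    using cs(1) qe by (simp add: N_def)
  have NK: "real N \<le> real K" "y \<le> real N" "real N < y + 1" using cs(2-4) by (simp_all add: N_def)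
  define lh where "lh = real N / real K"
  have lh: "lam W \<le> lh" "lh < lam W + 1 / real K" "lh \<le> 1"
    using NK K0 by (auto simp: lh_def y_def field_simps)
  have KN: "real (K - N) = real K - real N" using NK(1) by simp
  have avg: "(\<Sum>c<K. opp W x (qry W c)) / real K = lh * S1 + (1 - lh) * S2"
    unfolding sum KN lh_def using K0 by (simp add: field_simps)
  have mix: "Z / 2 \<le> lam W * S1 + (1 - lam W) * S2"
    using lam_mix[OF assms] by (simp add: Z_def S1_def S2_def)
  have b1: "0 \<le> S1" "S1 \<le> Z" "0 \<le> S2" "S2 \<le> Z"
    using opp_bounds[OF assms] by (auto simp: S1_def S2_def Z_def)
  have e: "lh * S1 + (1 - lh) * S2 = (lam W * S1 + (1 - lam W) * S2) + (lh - lam W) * (S1 - S2)"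
    by (simp add: algebra_simps)
  have f1: "(lh - lam W) * (- Z) \<le> (lh - lam W) * (S1 - S2)"
    using lh b1 by (intro mult_left_mono) auto
  have f2: "(1 / real K) * (- Z) \<le> (lh - lam W) * (- Z)"
    using lh b1 by (intro mult_right_mono_neg) auto
  have "Z / 2 - Z / real K \<le> lh * S1 + (1 - lh) * S2" using mix e f1 f2 by simp
  then have "Z * (1/2 - 1/real K) \<le> (\<Sum>c<K. opp W x (qry W c)) / real K"
    using avg by (simp add: right_diff_distrib)
  then show ?thesis by (simp add: K_def Z_def)
qed

lemma tot_upd_gen:
  "tot (upd W q b) = (if b then (1 - p) * Lw W q + p * Rw W q else p * Lw W q + (1 - p) * Rw W q)"
  unfolding tot_def upd_def Lw_def Rw_def
  by (auto simp: sum_distrib_left sum.distrib[symmetric] intro!: sum.cong)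

lemma tot_upd:
  assumes "x \<in> {1..D}"
  shows "tot (upd W q b) = (if b = (x < q) then (1 - p) * (tot W - opp W x q) + p * opp W x q
                            else p * (tot W - opp W x q) + (1 - p) * opp W x q)"
  by (simp add: tot_upd_gen opp_def Lw_Rw[of W q, symmetric] algebra_simps)

definition odds :: "(nat \<Rightarrow> real) \<Rightarrow> nat \<Rightarrow> real" where
  "odds W x = (tot W - W x) / W x"

definition K0 :: real where
  "K0 = log 2 ((1 - eps) / eps) + log 2 ((1 - p) / p)"

definition Phi0 :: "nat \<Rightarrow> (nat \<Rightarrow> real) \<Rightarrow> real" where
  "Phi0 x W = max 0 (log 2 (odds W x) + K0)"

definition Ip :: real where "Ip = capacity p - 4 / 2^k"

definition Psi :: "nat \<Rightarrow> (nat \<Rightarrow> real) \<Rightarrow> nat \<Rightarrow> real" where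
  "Psi x W c = Ip + (step_prob p x (Query (qry W c)) True * Phi0 x (upd W (qry W c) True)
                   + step_prob p x (Query (qry W c)) False * Phi0 x (upd W (qry W c) False))"

lemma Phi0_nonneg: "0 \<le> Phi0 x W" by (simp add: Phi0_def)

lemma rest_pos:
  assumes "pos W" "x \<in> {1..D}"
  shows "0 < tot W - W x"
proof -
  have "\<exists>y\<in>{1..D}. y \<noteq> x"
  proof (cases "x = 1")
    case True then show ?thesis using D2 by (intro bexI[of _ 2]) auto
  next
    case False then show ?thesis using D2 by (intro bexI[of _ 1]) auto
  qed
  then obtain y where y: "y \<in> {1..D}" "y \<noteq> x" by blast
  have "tot W = W x + (\<Sum>z\<in>{1..D} - {x}. W z)"
    unfolding tot_def using assms(2) by (simp add: sum.remove)
  moreover have "W y \<le> (\<Sum>z\<in>{1..D} - {x}. W z)"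
    using y assms(1) by (intro member_le_sum) (auto simp: pos_def less_imp_le)
  moreover have "0 < W y" using assms(1) by (simp add: pos_def)
  ultimately show ?thesis by simp
qed

lemma qlem:
  assumes W: "pos W" and x: "x \<in> {1..D}" and ns: "\<not> stopc W"
  shows "step_prob p x (Query q) True * Phi0 x (upd W q True) + step_prob p x (Query q) False * Phi0 x (upd W q False)
         \<le> log 2 (odds W x) + K0 - capacity p + (1 - 2*p)^2 * (1 - 2 * (opp W x q / (tot W - W x))) / ln 2"
proof -
  define Z where "Z = tot W"
  define X where "X = W x"
  define S where "S = opp W x q"
  define Od where "Od = odds W x"
  define u where "u = S / (Z - X)"
  have Xp: "0 < X" using W by (simp add: pos_def X_def)
  have ZX: "0 < Z - X" using rest_pos[OF W x] by (simp add: Z_def X_def)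
  have Sb: "0 \<le> S" "S \<le> Z - X" using opp_bounds[OF W x] by (auto simp: S_def Z_def X_def)
  have u: "0 \<le> u" "u \<le> 1" using Sb ZX by (auto simp: u_def)
  have Oe: "Od = (Z - X) / X" by (simp add: Od_def odds_def Z_def X_def)
  have Op: "0 < Od" using Oe ZX Xp by simp
  have "X < (1 - eps) * Z" using ns x by (auto simp: stopc_def not_le X_def Z_def)
  then have Oeps: "eps / (1 - eps) < Od" unfolding Oe using e0 e1 Xp by (simp add: field_simps)
  define a where "a = 1 - u * (1 - 2*p) / (1 - p)"
  define bb where "bb = 1 + u * (1 - 2*p) / p"
  have a_ge: "p / (1 - p) \<le> a"
  proof -
    have "u * (1 - 2*p) / (1 - p) \<le> (1 - 2*p) / (1 - p)"
      using u p0 p1 by (intro divide_right_mono) (auto simp: mult_le_cancel_right1)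
    moreover have "(1 - 2*p) / (1 - p) = 1 - p / (1 - p)" using p1 by (simp add: field_simps)
    ultimately show ?thesis by (simp add: a_def)
  qed
  have pp: "0 < p / (1 - p)" using p0 p1 by simp
  have bb_ge: "p / (1 - p) \<le> bb"
  proof -
    have "p / (1 - p) \<le> 1" using p1 by simp
    moreover have "0 \<le> u * (1 - 2*p) / p" using u p0 p1 by simp
    ultimately show ?thesis by (simp add: bb_def)
  qed
  have ap: "0 < a" using a_ge pp by linarith
  have bp: "0 < bb" using bb_ge pp by linarith
  have odds_c: "odds (upd W q (x < q)) x = Od * a"
  proof -
    have t: "tot (upd W q (x < q)) = (1 - p) * (Z - S) + p * S" using tot_upd[OF x, of W q "x < q"]
      by (simp add: Z_def S_def)
    have w: "upd W q (x < q) x = (1 - p) * X" by (simp add: upd_def X_def)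
    define Y where "Y = Z - X"
    have Y: "0 < Y" "Z = X + Y" using ZX by (auto simp: Y_def)
    have np: "1 - p \<noteq> 0" using p1 by simp
    show ?thesis unfolding odds_def t w Oe a_def u_def Y(2) using Xp Y(1) p0 p1 np
      by (simp add: field_simps)
  qed
  have odds_w: "odds (upd W q (\<not> x < q)) x = Od * bb"
  proof -
    have t: "tot (upd W q (\<not> x < q)) = p * (Z - S) + (1 - p) * S" using tot_upd[OF x, of W q "\<not> x < q"]
      by (simp add: Z_def S_def)
    have w: "upd W q (\<not> x < q) x = p * X" by (simp add: upd_def X_def)
    define Y where "Y = Z - X"
    have Y: "0 < Y" "Z = X + Y" using ZX by (auto simp: Y_def)
    show ?thesis unfolding odds_def t w Oe bb_def u_def Y(2) using Xp Y(1) p0 p1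
      by (simp add: field_simps)
  qed
  have K0e: "K0 = - log 2 (eps / (1 - eps)) - log 2 (p / (1 - p))"
  proof -
    have "log 2 ((1 - eps) / eps) = - log 2 (eps / (1 - eps))"
      using e0 e1 by (simp add: log_divide)
    moreover have "log 2 ((1 - p) / p) = - log 2 (p / (1 - p))"
      using p0 p1 by (simp add: log_divide)
    ultimately show ?thesis by (simp add: K0_def)
  qed
  have lowb: "0 \<le> log 2 (Od * c) + K0" if "p / (1 - p) \<le> c" for c
  proof -
    have cp: "0 < c" using that pp by linarith
    have "eps / (1 - eps) * (p / (1 - p)) \<le> Od * c"
      using Oeps that pp e0 e1 Op by (intro mult_mono) auto
    moreover have "0 < eps / (1 - eps) * (p / (1 - p))" using e0 e1 pp p0 p1 by (intro mult_pos_pos divide_pos_pos) auto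
    moreover have "0 < Od * c" using Op cp by simp
    ultimately have "log 2 (eps / (1 - eps) * (p / (1 - p))) \<le> log 2 (Od * c)"
      by (subst log_le_cancel_iff) auto
    moreover have "log 2 (eps / (1 - eps) * (p / (1 - p))) = log 2 (eps / (1 - eps)) + log 2 (p / (1 - p))"
      using e0 e1 pp by (subst log_mult) auto
    ultimately show ?thesis using K0e by simp
  qed
  have P1: "Phi0 x (upd W q (x < q)) = log 2 Od + log 2 a + K0"
    unfolding Phi0_def odds_c using lowb[OF a_ge] Op ap by (simp add: log_mult)
  have P2: "Phi0 x (upd W q (\<not> x < q)) = log 2 Od + log 2 bb + K0"
    unfolding Phi0_def odds_w using lowb[OF bb_ge] Op bp by (simp add: log_mult)
  have sp: "step_prob p x (Query q) True * Phi0 x (upd W q True) + step_prob p x (Query q) False * Phi0 x (upd W q False)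
       = (1 - p) * Phi0 x (upd W q (x < q)) + p * Phi0 x (upd W q (\<not> x < q))"
    by (cases "x < q") (simp_all add: step_prob_def)
  have "(1 - p) * Phi0 x (upd W q (x < q)) + p * Phi0 x (upd W q (\<not> x < q))
      = log 2 Od + K0 + ((1 - p) * log 2 a + p * log 2 bb)"
    unfolding P1 P2 by (simp add: algebra_simps)
  also have "\<dots> \<le> log 2 Od + K0 + (- capacity p + (1 - 2*p)^2 * (1 - 2*u) / ln 2)"
    using key_ineq[OF p0 p1 u] unfolding a_def bb_def by simp
  finally show ?thesis unfolding sp by (simp add: Od_def u_def S_def Z_def X_def)
qed

lemma drift:
  assumes W: "pos W" and x: "x \<in> {1..D}" and ns: "\<not> stopc W"
  shows "(\<Sum>c<2^k. Psi x W c) / 2^k \<le> Phi0 x W"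
proof -
  define K :: real where "K = 2^k"
  have Kp: "0 < K" by (simp add: K_def)
  define Z where "Z = tot W - W x"
  have Zp: "0 < Z" using rest_pos[OF W x] by (simp add: Z_def)
  define T where "T = log 2 (odds W x) + K0"
  define u where "u c = opp W x (qry W c) / Z" for c
  define Cc where "Cc = (1 - 2*p)^2 / ln 2"
  have each: "Psi x W c \<le> T - 4 / K + Cc * (1 - 2 * u c)" for c
    using qlem[OF W x ns, of "qry W c"] unfolding Psi_def Ip_def T_def u_def Z_def K_def Cc_def by simp
  have "(\<Sum>c<2^k. Psi x W c) \<le> (\<Sum>c<(2::nat)^k. T - 4 / K + Cc * (1 - 2 * u c))"
    by (intro sum_mono each)
  also have "\<dots> = K * (T - 4 / K) + Cc * (K - 2 * (\<Sum>c<(2::nat)^k. u c))"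
    by (simp add: sum.distrib sum_subtractf sum_distrib_left[symmetric] K_def)
  finally have s0: "(\<Sum>c<2^k. Psi x W c) \<le> K * (T - 4 / K) + Cc * (K - 2 * (\<Sum>c<(2::nat)^k. u c))" .
  have "(\<Sum>c<2^k. Psi x W c) / K \<le> (K * (T - 4 / K) + Cc * (K - 2 * (\<Sum>c<(2::nat)^k. u c))) / K"
    using s0 Kp by (rule divide_right_mono[OF _ less_imp_le])
  also have "\<dots> = T - 4 / K + Cc * (1 - 2 * ((\<Sum>c<(2::nat)^k. u c) / K))"
    using Kp by (simp add: field_simps)
  finally have s1: "(\<Sum>c<2^k. Psi x W c) / K \<le> T - 4 / K + Cc * (1 - 2 * ((\<Sum>c<(2::nat)^k. u c) / K))" .
  have avg: "1/2 - 1/K \<le> (\<Sum>c<(2::nat)^k. u c) / K"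
  proof -
    have "Z * (1/2 - 1/K) \<le> (\<Sum>c<2^k. opp W x (qry W c)) / K"
      using avg_opp[OF W x] by (simp add: Z_def K_def)
    also have "(\<Sum>c<2^k. opp W x (qry W c)) = Z * (\<Sum>c<(2::nat)^k. u c)"
      using Zp by (simp add: u_def sum_distrib_left)
    finally have "Z * (1/2 - 1/K) \<le> Z * ((\<Sum>c<(2::nat)^k. u c) / K)" by simp
    then show ?thesis using Zp by (rule mult_left_le_imp_le)
  qed
  have c1: "(1 - 2*p)^2 \<le> 1" using p0 p1 by (simp add: power_le_one abs_le_iff)
  have c2: "1 - 2 * ((\<Sum>c<(2::nat)^k. u c) / K) \<le> 2 / K" using avg by simp
  have c3: "(1 - 2*p)^2 * (1 - 2 * ((\<Sum>c<(2::nat)^k. u c) / K)) \<le> 2 / K"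
  proof -
    have "(1 - 2*p)^2 * (1 - 2 * ((\<Sum>c<(2::nat)^k. u c) / K)) \<le> (1 - 2*p)^2 * (2 / K)"
      using c2 by (intro mult_left_mono) auto
    also have "\<dots> \<le> 1 * (2 / K)" using c1 Kp by (intro mult_right_mono) auto
    finally show ?thesis by simp
  qed
  have c4: "Cc * (1 - 2 * ((\<Sum>c<(2::nat)^k. u c) / K)) \<le> 4 / K"
  proof -
    have l2: "1/2 \<le> ln (2::real)" by (rule ln2_ge_half)
    have "Cc * (1 - 2 * ((\<Sum>c<(2::nat)^k. u c) / K))
        = ((1 - 2*p)^2 * (1 - 2 * ((\<Sum>c<(2::nat)^k. u c) / K))) / ln 2" by (simp add: Cc_def)
    also have "\<dots> \<le> (2 / K) / ln 2" using c3 l2 by (intro divide_right_mono) auto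
    also have "\<dots> \<le> (2 / K) / (1/2)" using l2 Kp by (intro divide_left_mono) auto
    finally show ?thesis by simp
  qed
  have "(\<Sum>c<2^k. Psi x W c) / K \<le> T" using s1 c4 by simp
  also have "T \<le> Phi0 x W" by (simp add: Phi0_def T_def)
  finally show ?thesis by (simp add: K_def)
qed

end

lemma interval_split:
  fixes f :: "nat \<Rightarrow> real"
  shows "(\<Sum>c\<in>{(2*a) * n..<(2*a+1) * n}. f c) + (\<Sum>c\<in>{(2*a+1) * n..<(2*a+1+1) * n}. f c)
       = (\<Sum>c\<in>{a * (2*n)..<(a+1) * (2*n)}. f c)"
proof -
  have e1: "(2*a) * n = a * (2*n)" by simp
  have e2: "(2*a+1+1) * n = (a+1) * (2*n)" by (simp add: algebra_simps)
  have "(\<Sum>c\<in>{(2*a) * n..<(2*a+1) * n}. f c) + (\<Sum>c\<in>{(2*a+1) * n..<(2*a+1+1) * n}. f c)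
      = (\<Sum>c\<in>{(2*a) * n..<(2*a+1+1) * n}. f c)"
    by (rule sum.atLeastLessThan_concat) (auto intro: mult_right_mono)
  then show ?thesis by (simp only: e1 e2)
qed

context nbs begin

definition PhiV :: "nat \<Rightarrow> bool list \<Rightarrow> real" where
  "PhiV x g = (let t = length g div (k + 1); r = length g mod (k + 1); W = Wt g t;
                   pv = bitval (drop (t * (k + 1)) g) in
               if r = 0 then Phi0 x W
               else (\<Sum>c\<in>{pv * 2^(k - r)..<(pv + 1) * 2^(k - r)}. Psi x W c) / 2^(k - r))"

lemma Psi_nonneg: "0 < Ip \<Longrightarrow> 0 \<le> Psi x W c"
  unfolding Psi_def using p0 p1
  by (intro add_nonneg_nonneg add_nonneg_nonneg mult_nonneg_nonneg step_prob_nonneg Phi0_nonneg) auto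

lemma PhiV_nonneg: "0 < Ip \<Longrightarrow> 0 \<le> PhiV x g"
  unfolding PhiV_def Let_def
  by (auto intro!: divide_nonneg_nonneg sum_nonneg Psi_nonneg Phi0_nonneg)

lemma drop_len: "length (drop (length g div (k + 1) * (k + 1)) g) = length g mod (k + 1)"
  by (metis add_diff_cancel_left' len_split length_drop)

lemma PhiV_coin:
  assumes x: "x \<in> {1..D}" and V: "V g = Coin"
  shows "step_prob p x (V g) True * PhiV x (g @ [True]) + step_prob p x (V g) False * PhiV x (g @ [False])
         \<le> PhiV x g"
    and "0 < length g mod (k + 1) \<Longrightarrow>
         step_prob p x (V g) True * PhiV x (g @ [True]) + step_prob p x (V g) False * PhiV x (g @ [False])
         = PhiV x g"
proof -
  let ?t = "length g div (k + 1)"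
  let ?r = "length g mod (k + 1)"
  let ?W = "Wt g ?t"
  let ?pv = "bitval (drop (?t * (k + 1)) g)"
  have r: "?r < k" using V_cases(1)[OF V] .
  have ns: "?r = 0 \<Longrightarrow> \<not> stopc ?W" using V unfolding V_def Let_def by (auto split: if_splits)
  have ch: "PhiV x (g @ [b]) = (\<Sum>c\<in>{(2 * ?pv + (if b then 1 else 0)) * 2^(k - Suc ?r)..<(2 * ?pv + (if b then 1 else 0) + 1) * 2^(k - Suc ?r)}. Psi x ?W c) / 2^(k - Suc ?r)" for b
  proof -
    have d: "drop (?t * (k + 1)) (g @ [b]) = drop (?t * (k + 1)) g @ [b]"
    proof -
      have "?t * (k + 1) \<le> length g" by (metis len_split le_add1)
      then show ?thesis by simp
    qed
    show ?thesis
      unfolding PhiV_def Let_def child_lt[OF r] Wt_child_lt[OF r] d by simp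
  qed
  have e: "2 ^ (k - ?r) = 2 * (2::nat) ^ (k - Suc ?r)" using r
    by (metis Suc_diff_Suc power_Suc)
  have er: "(2::real) ^ (k - ?r) = 2 * 2 ^ (k - Suc ?r)" using r
    by (metis Suc_diff_Suc power_Suc)
  have sum2: "step_prob p x (V g) True * PhiV x (g @ [True]) + step_prob p x (V g) False * PhiV x (g @ [False])
      = (\<Sum>c\<in>{?pv * 2^(k - ?r)..<(?pv + 1) * 2^(k - ?r)}. Psi x ?W c) / 2^(k - ?r)"
  proof -
    have "step_prob p x (V g) True * PhiV x (g @ [True]) + step_prob p x (V g) False * PhiV x (g @ [False])
       = ((\<Sum>c\<in>{(2 * ?pv) * 2^(k - Suc ?r)..<(2 * ?pv + 1) * 2^(k - Suc ?r)}. Psi x ?W c)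
          + (\<Sum>c\<in>{(2 * ?pv + 1) * 2^(k - Suc ?r)..<(2 * ?pv + 1 + 1) * 2^(k - Suc ?r)}. Psi x ?W c)) / (2 * 2^(k - Suc ?r))"
      unfolding ch V by (simp add: step_prob_def field_simps)
    also have "\<dots> = (\<Sum>c\<in>{?pv * (2 * 2^(k - Suc ?r))..<(?pv + 1) * (2 * 2^(k - Suc ?r))}. Psi x ?W c) / (2 * 2^(k - Suc ?r))"
      by (subst interval_split) simp
    finally show ?thesis unfolding e er .
  qed
  show "0 < ?r \<Longrightarrow> step_prob p x (V g) True * PhiV x (g @ [True]) + step_prob p x (V g) False * PhiV x (g @ [False])
         = PhiV x g"
    unfolding sum2 by (simp add: PhiV_def Let_def)
  show "step_prob p x (V g) True * PhiV x (g @ [True]) + step_prob p x (V g) False * PhiV x (g @ [False])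
         \<le> PhiV x g"
  proof (cases "?r = 0")
    case False then show ?thesis unfolding sum2 by (simp add: PhiV_def Let_def)
  next
    case True
    have pv0: "?pv = 0" using drop_len[of g] True by simp
    have "(\<Sum>c\<in>{?pv * 2^(k - ?r)..<(?pv + 1) * 2^(k - ?r)}. Psi x ?W c) / 2^(k - ?r)
        = (\<Sum>c<2^k. Psi x ?W c) / 2^k"
      unfolding pv0 True by (simp add: atLeast0LessThan)
    also have "\<dots> \<le> Phi0 x ?W" by (rule drift[OF pos_Wt x ns[OF True]])
    also have "\<dots> = PhiV x g" using True by (simp add: PhiV_def Let_def)
    finally show ?thesis unfolding sum2 .
  qed
qed

lemma PhiV_query:
  assumes x: "x \<in> {1..D}" and V: "V g = Query q"
  shows "Ip + step_prob p x (V g) True * PhiV x (g @ [True]) + step_prob p x (V g) False * PhiV x (g @ [False])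
         = PhiV x g"
proof -
  let ?t = "length g div (k + 1)"
  let ?r = "length g mod (k + 1)"
  let ?W = "Wt g ?t"
  have r: "?r = k" and q: "q = qry ?W (coins g ?t)" using V_cases(2)[OF V] by auto
  have ch: "PhiV x (g @ [b]) = Phi0 x (upd ?W q b)" for b
    unfolding PhiV_def Let_def child_eq[OF r] Wt_child_eq[OF r] q by simp
  have cv: "coins g ?t = bitval (drop (?t * (k + 1)) g)"
    unfolding coins_def using drop_len[of g] r by simp
  have "PhiV x g = Psi x ?W (coins g ?t)"
    unfolding PhiV_def Let_def using r k1 cv by simp
  then show ?thesis unfolding V ch Psi_def q by simp
qed

definition HV :: "nat \<Rightarrow> bool list \<Rightarrow> real" where
  "HV x g = (real k + 1) / Ip * PhiV x g + real (k - length g mod (k + 1))"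

lemma HV_nonneg: "0 < Ip \<Longrightarrow> 0 \<le> HV x g"
  unfolding HV_def by (intro add_nonneg_nonneg mult_nonneg_nonneg divide_nonneg_nonneg PhiV_nonneg) auto

lemma condV_query:
  assumes x: "x \<in> {1..D}" and Ip: "0 < Ip"
  shows "Ip * (if is_query (V g) then 1 else 0)
         + step_prob p x (V g) True * PhiV x (g @ [True]) + step_prob p x (V g) False * PhiV x (g @ [False])
         \<le> PhiV x g"
proof (cases "V g")
  case (Query q) then show ?thesis using PhiV_query[OF x Query] by (simp add: is_query_def)
next
  case Coin then show ?thesis using PhiV_coin(1)[OF x Coin] by (simp add: is_query_def)
next
  case (Return u) then show ?thesis using PhiV_nonneg[OF Ip] by (simp add: is_query_def step_prob_def)
qed

lemma condV_halt:
  assumes x: "x \<in> {1..D}" and Ip: "0 < Ip"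
  shows "(if is_return (V g) then 0 else 1)
         + step_prob p x (V g) True * HV x (g @ [True]) + step_prob p x (V g) False * HV x (g @ [False])
         \<le> HV x g"
proof (cases "V g")
  case (Query q)
  have r: "length g mod (k + 1) = k" using V_cases(2)[OF Query] by simp
  have r': "length (g @ [b]) mod (k + 1) = 0" for b using child_eq(2)[OF r] .
  have sp: "step_prob p x (V g) True + step_prob p x (V g) False = 1"
    using step_prob_sum[of p x "V g"] Query by (simp add: is_return_def)
  have e: "Ip + step_prob p x (V g) True * PhiV x (g @ [True]) + step_prob p x (V g) False * PhiV x (g @ [False])
         = PhiV x g" by (rule PhiV_query[OF x Query])
  have "step_prob p x (V g) True * HV x (g @ [True]) + step_prob p x (V g) False * HV x (g @ [False])
      = (real k + 1) / Ip * (step_prob p x (V g) True * PhiV x (g @ [True]) + step_prob p x (V g) False * PhiV x (g @ [False]))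
        + real k * (step_prob p x (V g) True + step_prob p x (V g) False)"
    unfolding HV_def r' by (simp add: algebra_simps)
  also have "\<dots> = (real k + 1) / Ip * (PhiV x g - Ip) + real k" using e sp by simp
  also have "\<dots> = HV x g - 1" unfolding HV_def r using Ip by (simp add: field_simps)
  finally show ?thesis using Query by (simp add: is_return_def)
next
  case Coin
  have r: "length g mod (k + 1) < k" using V_cases(1)[OF Coin] .
  have r': "length (g @ [b]) mod (k + 1) = Suc (length g mod (k + 1))" for b using child_lt(2)[OF r] .
  have le: "step_prob p x (V g) True * PhiV x (g @ [True]) + step_prob p x (V g) False * PhiV x (g @ [False])
         \<le> PhiV x g" by (rule PhiV_coin(1)[OF x Coin])
  have "step_prob p x (V g) True * HV x (g @ [True]) + step_prob p x (V g) False * HV x (g @ [False])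
      = (real k + 1) / Ip * (step_prob p x (V g) True * PhiV x (g @ [True]) + step_prob p x (V g) False * PhiV x (g @ [False]))
        + real (k - Suc (length g mod (k + 1)))"
    unfolding HV_def r' Coin using Ip by (simp add: step_prob_def field_simps)
  also have "\<dots> \<le> (real k + 1) / Ip * PhiV x g + real (k - Suc (length g mod (k + 1)))"
    using le Ip by (intro add_right_mono mult_left_mono) auto
  also have "\<dots> = HV x g - 1" unfolding HV_def using r by (simp add: of_nat_diff)
  finally show ?thesis using Coin by (simp add: is_return_def)
next
  case (Return u) then show ?thesis using HV_nonneg[OF Ip] by (simp add: is_return_def step_prob_def)
qed

end

definition transl :: "nat \<Rightarrow> action \<Rightarrow> action" where
  "transl r a = (case a of Query q \<Rightarrow> Query (q - r) | Coin \<Rightarrow> Coin | Return u \<Rightarrow> Return (u - r))"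

lemma step_transl: "step_prob p v (transl r a) b = step_prob p (v + r) a b"
  by (cases a) (auto simp: transl_def step_prob_def)

lemma is_query_transl: "is_query (transl r a) = is_query a"
  by (cases a) (auto simp: transl_def is_query_def)

lemma is_return_transl: "is_return (transl r a) = is_return a"
  by (cases a) (auto simp: transl_def is_return_def)

lemma transl_ret: "transl r a \<noteq> Return v \<Longrightarrow> a \<noteq> Return (v + r)"
  by (auto simp: transl_def)

lemma sum_len_add:
  "(\<Sum>h\<in>{h::bool list. length h = j + K}. f h) = (\<Sum>bs\<in>{h. length h = j}. \<Sum>g\<in>{h. length h = K}. f (bs @ g))"
proof -
  have e: "{h::bool list. length h = j + K} = (\<lambda>(a, b). a @ b) ` ({h. length h = j} \<times> {h. length h = K})"
  proof (rule set_eqI, rule iffI)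
    fix h :: "bool list" assume "h \<in> {h. length h = j + K}"
    then have "h = (\<lambda>(a, b). a @ b) (take j h, drop j h)" "(take j h, drop j h) \<in> {h. length h = j} \<times> {h. length h = K}"
      by auto
    then show "h \<in> (\<lambda>(a, b). a @ b) ` ({h. length h = j} \<times> {h. length h = K})" by blast
  qed auto
  have i: "inj_on (\<lambda>(a, b). a @ b) ({h::bool list. length h = j} \<times> {h. length h = K})"
    by (auto simp: inj_on_def)
  show ?thesis unfolding e sum.reindex[OF i] sum.cartesian_product by (simp add: case_prod_beta)
qed

lemma sum_shift: "(\<Sum>N<j + M. f N) = (\<Sum>N<j. f N) + (\<Sum>K<M. f (j + K))" for j M :: nat
  by (induction M) (simp_all add: algebra_simps)

context nbs begin

definition S :: "nat \<Rightarrow> bool list \<Rightarrow> action" where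
  "S j h = (if length h < j then Coin else transl (bitval (take j h)) (V (drop j h)))"

lemma S_long: "j \<le> length h \<Longrightarrow> S j h = transl (bitval (take j h)) (V (drop j h))"
  by (simp add: S_def)

lemma reach_S_short: "length bs \<le> j \<Longrightarrow> reach_prob p (S j) v bs = (1/2) ^ length bs"
proof (induction bs rule: rev_induct)
  case Nil then show ?case by (simp add: reach_Nil)
next
  case (snoc b bs)
  then show ?case by (simp add: reach_snoc S_def step_prob_def)
qed

lemma reach_S:
  assumes "length bs = j"
  shows "reach_prob p (S j) v (bs @ g) = (1/2) ^ j * reach_prob p V (v + bitval bs) g"
proof (induction g rule: rev_induct)
  case Nil then show ?case using reach_S_short[of bs j v] assms by (simp add: reach_Nil)
next
  case (snoc b g)
  have "S j (bs @ g) = transl (bitval bs) (V g)" using assms by (simp add: S_long)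
  then show ?case using snoc.IH
    by (simp add: reach_snoc step_transl flip: append_assoc)
qed

lemma PhiV_Nil: "x \<in> {1..D} \<Longrightarrow> PhiV x [] = PhiV 1 []"
proof -
  assume x: "x \<in> {1..D}"
  have t: "tot (\<lambda>_. 1) = real D" by (simp add: tot_def)
  have "odds (\<lambda>_. 1) x = odds (\<lambda>_. 1) 1" by (simp add: odds_def)
  then show ?thesis by (simp add: PhiV_def Phi0_def)
qed

lemma HV_Nil: "x \<in> {1..D} \<Longrightarrow> HV x [] = HV 1 []"
proof -
  assume x: "x \<in> {1..D}"
  have e: "PhiV x [] = PhiV 1 []" by (rule PhiV_Nil[OF x])
  show ?thesis by (simp add: HV_def e)
qed

definition PhiS :: "nat \<Rightarrow> nat \<Rightarrow> bool list \<Rightarrow> real" where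
  "PhiS j v h = (if length h < j then PhiV 1 [] else PhiV (v + bitval (take j h)) (drop j h))"

definition HS :: "nat \<Rightarrow> nat \<Rightarrow> bool list \<Rightarrow> real" where
  "HS j v h = (if length h < j then HV 1 [] + real (j - length h) else HV (v + bitval (take j h)) (drop j h))"

lemma condS_query:
  assumes hv: "\<And>bs. length bs = j \<Longrightarrow> v + bitval bs \<in> {1..D}" and Ip: "0 < Ip"
  shows "Ip * (if is_query (S j h) then 1 else 0)
         + step_prob p v (S j h) True * PhiS j v (h @ [True]) + step_prob p v (S j h) False * PhiS j v (h @ [False])
         \<le> PhiS j v h"
proof (cases "length h < j")
  case True
  have ch: "PhiS j v (h @ [b]) = PhiV 1 []" for b
  proof (cases "Suc (length h) < j")
    case True then show ?thesis by (simp add: PhiS_def)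
  next
    case False
    then have l: "length (h @ [b]) = j" using \<open>length h < j\<close> by simp
    then have "drop j (h @ [b]) = []" by simp
    moreover have "v + bitval (take j (h @ [b])) \<in> {1..D}" by (rule hv) (use l in simp)
    then have "PhiV (v + bitval (take j (h @ [b]))) [] = PhiV 1 []" by (rule PhiV_Nil)
    ultimately show ?thesis using l by (simp add: PhiS_def)
  qed
  have pe: "PhiS j v h = PhiV 1 []" using True by (simp add: PhiS_def)
  show ?thesis using True by (simp add: S_def ch pe step_prob_def is_query_def)
next
  case False
  let ?x = "v + bitval (take j h)"
  have x: "?x \<in> {1..D}" using hv False by simp
  have ch: "PhiS j v (h @ [b]) = PhiV ?x (drop j h @ [b])" for b using False by (simp add: PhiS_def)
  show ?thesis using condV_query[OF x Ip, of "drop j h"] False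
    by (simp add: S_long ch step_transl is_query_transl PhiS_def)
qed

lemma condS_halt:
  assumes hv: "\<And>bs. length bs = j \<Longrightarrow> v + bitval bs \<in> {1..D}" and Ip: "0 < Ip"
  shows "(if is_return (S j h) then 0 else 1)
         + step_prob p v (S j h) True * HS j v (h @ [True]) + step_prob p v (S j h) False * HS j v (h @ [False])
         \<le> HS j v h"
proof (cases "length h < j")
  case True
  have ch: "HS j v (h @ [b]) = HV 1 [] + real (j - Suc (length h))" for b
  proof (cases "Suc (length h) < j")
    case True then show ?thesis by (simp add: HS_def)
  next
    case False
    then have l: "length (h @ [b]) = j" using \<open>length h < j\<close> by simp
    then have "drop j (h @ [b]) = []" by simp
    moreover have "v + bitval (take j (h @ [b])) \<in> {1..D}" by (rule hv) (use l in simp)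
    then have "HV (v + bitval (take j (h @ [b]))) [] = HV 1 []" by (rule HV_Nil)
    ultimately show ?thesis using l by (simp add: HS_def)
  qed
  have "real (j - length h) = real (j - Suc (length h)) + 1" using True by simp
  moreover have pe: "HS j v h = HV 1 [] + real (j - length h)" using True by (simp add: HS_def)
  ultimately show ?thesis using True by (simp add: S_def ch step_prob_def is_return_def)
next
  case False
  let ?x = "v + bitval (take j h)"
  have x: "?x \<in> {1..D}" using hv False by simp
  have ch: "HS j v (h @ [b]) = HV ?x (drop j h @ [b])" for b using False by (simp add: HS_def)
  show ?thesis using condV_halt[OF x Ip, of "drop j h"] False
    by (simp add: S_long ch step_transl is_return_transl HS_def)
qed

lemma PhiS_nonneg: "0 < Ip \<Longrightarrow> 0 \<le> PhiS j v h"
  by (simp add: PhiS_def PhiV_nonneg)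

lemma HS_nonneg: "0 < Ip \<Longrightarrow> 0 \<le> HS j v h"
  using HV_nonneg[of 1 "[]"] by (simp add: HS_def HV_nonneg)


end

context nbs begin

lemma amax_props:
  assumes "stopc W"
  shows "amax W \<in> {1..D}" "(1 - eps) * tot W \<le> W (amax W)"
proof -
  have "\<exists>u. u \<in> {1..D} \<and> (1 - eps) * tot W \<le> W u" using assms by (auto simp: stopc_def)
  from someI_ex[OF this] show "amax W \<in> {1..D}" "(1 - eps) * tot W \<le> W (amax W)"
    unfolding amax_def by auto
qed

lemma sum_neq: "u \<in> {1..D} \<Longrightarrow> (\<Sum>x\<in>{1..D}. if u \<noteq> x then W x else 0) = tot W - W u"
proof -
  assume u: "u \<in> {1..D}"
  have "(\<Sum>x\<in>{1..D}. if u \<noteq> x then W x else 0) = (\<Sum>x\<in>{1..D}. W x - (if u = x then W x else 0))"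
    by (intro sum.cong) auto
  also have "\<dots> = tot W - W u" using u by (simp add: sum_subtractf tot_def)
  finally show ?thesis .
qed

lemma bayes: "(\<Sum>x\<in>{1..D}. lvE p V x K) \<le> eps * (\<Sum>x\<in>{1..D}. lvR p V x K)"
proof -
  have pt: "(\<Sum>x\<in>{1..D}. if is_return (V g) \<and> V g \<noteq> Return x then reach_prob p V x g else 0)
        \<le> eps * (\<Sum>x\<in>{1..D}. if is_return (V g) then reach_prob p V x g else 0)" for g
  proof (cases "V g")
    case (Return u)
    let ?W = "Wt g (length g div (k + 1))"
    have st: "stopc ?W" and u: "u = amax ?W" using V_cases(3)[OF Return] by auto
    note am = amax_props[OF st]
    have "(\<Sum>x\<in>{1..D}. if is_return (V g) \<and> V g \<noteq> Return x then reach_prob p V x g else 0)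
        = Cf g * (\<Sum>x\<in>{1..D}. if u \<noteq> x then ?W x else 0)"
      unfolding reach_V by (simp add: Return is_return_def sum_distrib_left if_distrib cong: if_cong)
    also have "\<dots> = Cf g * (tot ?W - ?W u)" by (subst sum_neq) (use am(1) u in auto)
    also have "\<dots> \<le> Cf g * (eps * tot ?W)"
      using am(2) u Cf_nonneg[of g] by (intro mult_left_mono) (auto simp: algebra_simps)
    also have "\<dots> = eps * (\<Sum>x\<in>{1..D}. if is_return (V g) then reach_prob p V x g else 0)"
      unfolding reach_V by (simp add: Return is_return_def sum_distrib_left tot_def algebra_simps)
    finally show ?thesis .
  qed (auto simp: is_return_def)
  have "(\<Sum>x\<in>{1..D}. lvE p V x K)
      = (\<Sum>g\<in>{h. length h = K}. \<Sum>x\<in>{1..D}. if is_return (V g) \<and> V g \<noteq> Return x then reach_prob p V x g else 0)"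
    unfolding lvE_def by (rule sum.swap)
  also have "\<dots> \<le> (\<Sum>g\<in>{h. length h = K}. eps * (\<Sum>x\<in>{1..D}. if is_return (V g) then reach_prob p V x g else 0))"
    by (intro sum_mono pt)
  also have "\<dots> = eps * (\<Sum>x\<in>{1..D}. lvR p V x K)"
    unfolding lvR_def sum_distrib_left[symmetric] by (subst sum.swap) simp
  finally show ?thesis .
qed

lemma reindex_le:
  fixes F :: "nat \<Rightarrow> real"
  assumes hv: "\<And>bs. length bs = j \<Longrightarrow> v + bitval bs \<in> {1..D}"
    and F: "\<And>x. x \<in> {1..D} \<Longrightarrow> 0 \<le> F x"
  shows "(\<Sum>bs\<in>{h. length h = j}. F (v + bitval bs)) \<le> (\<Sum>x\<in>{1..D}. F x)"
proof -
  have i: "inj_on (\<lambda>bs. v + bitval bs) {h. length h = j}"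
    by (auto simp: inj_on_def intro: bitval_inj)
  have "(\<Sum>bs\<in>{h. length h = j}. F (v + bitval bs)) = (\<Sum>x\<in>(\<lambda>bs. v + bitval bs) ` {h. length h = j}. F x)"
    by (simp add: sum.reindex[OF i])
  also have "\<dots> \<le> (\<Sum>x\<in>{1..D}. F x)"
    by (rule sum_mono2) (use hv F in auto)
  finally show ?thesis .
qed

lemma lvE_S_short: "N < j \<Longrightarrow> lvE p (S j) v N = 0"
  unfolding lvE_def by (intro sum.neutral) (auto simp: S_def is_return_def)

lemma lvE_S_long:
  "lvE p (S j) v (j + K) \<le> (1/2) ^ j * (\<Sum>bs\<in>{h. length h = j}. lvE p V (v + bitval bs) K)"
proof -
  have "lvE p (S j) v (j + K) = (\<Sum>bs\<in>{h. length h = j}. \<Sum>g\<in>{h. length h = K}.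
      if is_return (S j (bs @ g)) \<and> S j (bs @ g) \<noteq> Return v then reach_prob p (S j) v (bs @ g) else 0)"
    unfolding lvE_def by (rule sum_len_add)
  also have "\<dots> \<le> (\<Sum>bs\<in>{h. length h = j}. \<Sum>g\<in>{h. length h = K}.
      (1/2) ^ j * (if is_return (V g) \<and> V g \<noteq> Return (v + bitval bs) then reach_prob p V (v + bitval bs) g else 0))"
  proof (intro sum_mono)
    fix bs g :: "bool list" assume bs: "bs \<in> {h. length h = j}" and "g \<in> {h. length h = K}"
    have Se: "S j (bs @ g) = transl (bitval bs) (V g)" using bs by (simp add: S_long)
    show "(if is_return (S j (bs @ g)) \<and> S j (bs @ g) \<noteq> Return v then reach_prob p (S j) v (bs @ g) else 0)
        \<le> (1/2) ^ j * (if is_return (V g) \<and> V g \<noteq> Return (v + bitval bs) then reach_prob p V (v + bitval bs) g else 0)"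
      using transl_ret[of "bitval bs" "V g" v] reach_S[of bs j v g] bs reach_nonneg[of p V "v + bitval bs" g] p0 p1
      by (auto simp: Se is_return_transl)
  qed
  also have "\<dots> = (1/2) ^ j * (\<Sum>bs\<in>{h. length h = j}. lvE p V (v + bitval bs) K)"
    unfolding lvE_def by (simp add: sum_distrib_left)
  finally show ?thesis .
qed

lemma err_S:
  assumes hv: "\<And>bs. length bs = j \<Longrightarrow> v + bitval bs \<in> {1..D}"
  shows "(\<Sum>N<M. lvE p (S j) v N) \<le> (1/2) ^ j * eps * real D"
proof -
  have pp: "0 \<le> p" "p \<le> 1" using p0 p1 by auto
  have "(\<Sum>N<M. lvE p (S j) v N) \<le> (\<Sum>N<j + M. lvE p (S j) v N)"
    by (rule sum_mono2) (auto intro: lvE_nonneg[OF pp])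
  also have "\<dots> = (\<Sum>K<M. lvE p (S j) v (j + K))"
    unfolding sum_shift by (simp add: lvE_S_short)
  also have "\<dots> \<le> (\<Sum>K<M. (1/2) ^ j * (\<Sum>bs\<in>{h. length h = j}. lvE p V (v + bitval bs) K))"
    by (intro sum_mono lvE_S_long)
  also have "\<dots> = (1/2) ^ j * (\<Sum>bs\<in>{h. length h = j}. \<Sum>K<M. lvE p V (v + bitval bs) K)"
    by (simp add: sum_distrib_left[symmetric] sum.swap[of _ "{..<M}"])
  also have "\<dots> \<le> (1/2) ^ j * (\<Sum>x\<in>{1..D}. \<Sum>K<M. lvE p V x K)"
    by (intro mult_left_mono reindex_le[OF hv]) (auto intro!: sum_nonneg lvE_nonneg[OF pp])
  also have "(\<Sum>x\<in>{1..D}. \<Sum>K<M. lvE p V x K) = (\<Sum>K<M. \<Sum>x\<in>{1..D}. lvE p V x K)"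
    by (rule sum.swap)
  also have "\<dots> \<le> (\<Sum>K<M. eps * (\<Sum>x\<in>{1..D}. lvR p V x K))"
    by (intro sum_mono bayes)
  also have "\<dots> = eps * (\<Sum>x\<in>{1..D}. \<Sum>K<M. lvR p V x K)"
    by (simp add: sum_distrib_left[symmetric] sum.swap[of _ "{..<M}"])
  also have "\<dots> \<le> eps * (\<Sum>x\<in>{1..D}. 1)"
    using e0 by (intro mult_left_mono sum_mono lvR_partial_le[OF pp]) auto
  finally show ?thesis by simp
qed

end

lemma ln_less_minus_one: "0 < x \<Longrightarrow> x \<noteq> 1 \<Longrightarrow> ln x < x - 1" for x :: real
proof -
  assume x: "0 < x" "x \<noteq> 1"
  have s: "0 < sqrt x" using x by simp
  have s1: "sqrt x \<noteq> 1" using x by auto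
  have "ln x = 2 * ln (sqrt x)" using x by (simp add: ln_sqrt)
  also have "\<dots> \<le> 2 * (sqrt x - 1)" using ln_le_minus_one[OF s] by simp
  also have "\<dots> < x - 1"
  proof -
    have "0 < (sqrt x - 1)^2" using s1 by simp
    then show ?thesis using x by (simp add: power2_eq_square algebra_simps)
  qed
  finally show ?thesis .
qed

lemma capacity_pos:
  fixes p :: real assumes p: "0 < p" "p < 1/2"
  shows "0 < capacity p"
proof -
  have a: "ln (1 / (2 * p)) < 1 / (2 * p) - 1"
    by (rule ln_less_minus_one) (use p in auto)
  have b: "ln (1 / (2 * (1 - p))) \<le> 1 / (2 * (1 - p)) - 1"
    by (rule ln_le_minus_one) (use p in auto)
  have la: "ln (1 / (2 * p)) = - ln 2 - ln p" using p by (simp add: ln_div ln_mult_pos)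
  have lb: "ln (1 / (2 * (1 - p))) = - ln 2 - ln (1 - p)"
    using p ln_mult_pos[of 2 "1 - p"] ln_div[of 1 "2 * (1 - p)"] by simp
  have "p * (- ln 2 - ln p) < p * (1 / (2 * p) - 1)" using a la p by simp
  moreover have "(1 - p) * (- ln 2 - ln (1 - p)) \<le> (1 - p) * (1 / (2 * (1 - p)) - 1)"
    using b lb p by (intro mult_left_mono) auto
  ultimately have "p * (- ln 2 - ln p) + (1 - p) * (- ln 2 - ln (1 - p)) < p * (1 / (2 * p) - 1) + (1 - p) * (1 / (2 * (1 - p)) - 1)"
    by linarith
  also have "\<dots> = 0" using p by (simp add: field_simps)
  finally have "- ln 2 < p * ln p + (1 - p) * ln (1 - p)" by (simp add: algebra_simps)
  then have "0 < 1 + (p * ln p + (1 - p) * ln (1 - p)) / ln 2"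
    by (simp add: field_simps)
  then show ?thesis using capacity_eq[of p] p by simp
qed

context nbs begin

lemma PhiV_start: "PhiV 1 [] = max 0 (log 2 (real D - 1) + K0)"
proof -
  have t: "tot (\<lambda>_. 1) = real D" by (simp add: tot_def)
  show ?thesis by (simp add: PhiV_def Phi0_def odds_def t)
qed

lemma main_bounds:
  assumes v: "1 \<le> v" "v + 2 ^ j \<le> D + 1" and j: "0 < j" and Ip: "0 < Ip"
  shows "halt_prob p (S j) v = 1"
    and "ennreal (1 - (1/2) ^ j * eps * real D) \<le> success_prob p (S j) v"
    and "expected_queries p (S j) v \<le> ennreal (PhiV 1 [] / Ip)"
proof -
  have pp: "0 \<le> p" "p \<le> 1" using p0 p1 by auto
  have hv: "v + bitval bs \<in> {1..D}" if "length bs = j" for bs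
    using bitval_less[of bs] that v by auto
  have HB: "(\<Sum>N<M. lvNR p (S j) v N) \<le> HS j v []" for M
  proof -
    have pb: "(\<Sum>N<M. \<Sum>h\<in>{h. length h = N}. reach_prob p (S j) v h * (if is_return (S j h) then 0 else 1))
          + (\<Sum>h\<in>{h. length h = M}. reach_prob p (S j) v h * HS j v h) \<le> HS j v []"
      by (rule potential_bound[OF pp HS_nonneg[OF Ip] condS_halt[OF hv Ip]]) auto
    have e: "(\<Sum>h\<in>{h. length h = N}. reach_prob p (S j) v h * (if is_return (S j h) then 0 else 1)) = lvNR p (S j) v N" for N
      unfolding lvNR_def by (intro sum.cong) auto
    have "0 \<le> (\<Sum>h\<in>{h. length h = M}. reach_prob p (S j) v h * HS j v h)"
      by (intro sum_nonneg mult_nonneg_nonneg reach_nonneg[OF pp] HS_nonneg[OF Ip])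
    then show ?thesis using pb e by simp
  qed
  show H: "halt_prob p (S j) v = 1" by (rule halting[OF pp HB])
  show "ennreal (1 - (1/2) ^ j * eps * real D) \<le> success_prob p (S j) v"
    by (rule success_bound[OF pp H err_S[OF hv]])
  have QB: "(\<Sum>N<M. \<Sum>h\<in>{h. length h = N}. if is_query (S j h) then reach_prob p (S j) v h else 0) \<le> PhiV 1 [] / Ip" for M
  proof -
    have pb: "(\<Sum>N<M. \<Sum>h\<in>{h. length h = N}. reach_prob p (S j) v h * (Ip * (if is_query (S j h) then 1 else 0)))
          + (\<Sum>h\<in>{h. length h = M}. reach_prob p (S j) v h * PhiS j v h) \<le> PhiS j v []"
      by (rule potential_bound[OF pp PhiS_nonneg[OF Ip] condS_query[OF hv Ip]]) (use Ip in auto)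
    have e: "(\<Sum>h\<in>{h. length h = N}. reach_prob p (S j) v h * (Ip * (if is_query (S j h) then 1 else 0)))
        = Ip * (\<Sum>h\<in>{h. length h = N}. if is_query (S j h) then reach_prob p (S j) v h else 0)" for N
      unfolding sum_distrib_left by (intro sum.cong) auto
    have "0 \<le> (\<Sum>h\<in>{h. length h = M}. reach_prob p (S j) v h * PhiS j v h)"
      by (intro sum_nonneg mult_nonneg_nonneg reach_nonneg[OF pp] PhiS_nonneg[OF Ip])
    moreover have "PhiS j v [] = PhiV 1 []" using j by (simp add: PhiS_def)
    ultimately have "Ip * (\<Sum>N<M. \<Sum>h\<in>{h. length h = N}. if is_query (S j h) then reach_prob p (S j) v h else 0) \<le> PhiV 1 []"
      using pb e by (simp add: sum_distrib_left)
    then show ?thesis using Ip by (simp add: field_simps)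
  qed
  show "expected_queries p (S j) v \<le> ennreal (PhiV 1 [] / Ip)"
    by (rule expected_bound[OF pp QB])
qed

end


theorem corollary1:
  fixes p :: real
  assumes "0 < p" and "p < 1 / 2"
  shows "\<exists>(C::real) (N::nat). \<forall>(\<delta>::real) (n::nat).
           0 < \<delta> \<and> \<delta> < 1 / 2 \<and> N \<le> n \<longrightarrow>
           (\<exists>s :: bool list \<Rightarrow> action. \<forall>v \<in> {1..n}.
              halt_prob p s v = 1 \<and>
              success_prob p s v \<ge> ennreal (1 - \<delta>) \<and>
              expected_queries p s v \<le>
                ennreal ((log 2 n + C * log 2 (log 2 n) + C * log 2 (1 / \<delta>)) / capacity p))"
proof -
  have p0: "0 < p" and p1: "p < 1/2" using assms by auto
  define I where "I = capacity p"
  have I: "0 < I" unfolding I_def by (rule capacity_pos[OF p0 p1])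
  define cp where "cp = log 2 ((1 - p) / p)"
  have cp: "0 < cp" unfolding cp_def using p0 p1 by (simp add: field_simps)
  define C where "C = 6 + 2 * cp"
  show ?thesis
  proof (intro exI[of _ C] exI[of _ "4::nat"] allI impI)
    fix \<delta> :: real and n :: nat
    assume H: "0 < \<delta> \<and> \<delta> < 1 / 2 \<and> 4 \<le> n"
    then have d0: "0 < \<delta>" and d1: "\<delta> < 1/2" and n4: "4 \<le> n" by auto
    obtain i where i: "2^i \<le> n" "n < 2^(i+1)" using ex_power_ivl1[of 2 n] n4 by auto
    define j where "j = i + 1"
    have j: "n < 2^j" "2^j \<le> 2*n" "0 < j" using i by (auto simp: j_def)
    define D where "D = n + 2^j - 1"
    define L where "L = log 2 (real n)"
    have L2: "2 \<le> L" unfolding L_def using le_log2_of_power[of 2 n] n4 by simp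
    obtain k0 where k0: "8 * L / I < 2^k0" using real_arch_pow[of 2 "8 * L / I"] by auto
    define k where "k = Suc k0"
    have k1: "1 \<le> k" by (simp add: k_def)
    have k2: "8 * L / I \<le> 2^k"
    proof -
      have a: "(2::real)^k0 \<le> 2 * 2^k0" by simp
      have b: "(2::real)^k = 2 * 2^k0" by (simp add: k_def)
      show ?thesis using k0 a b by linarith
    qed
    define eps where "eps = \<delta> / 2"
    have D2: "2 \<le> D" using n4 j unfolding D_def by simp
    interpret nbs p k D eps
      by unfold_locales (use p0 p1 k1 D2 d0 d1 in \<open>auto simp: eps_def\<close>)
    have f1: "4 / 2^k \<le> I / (2 * L)"
    proof -
      have "8 * L \<le> I * 2^k" using k2 I by (simp add: field_simps)
      then show ?thesis using I L2 by (simp add: field_simps)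
    qed
    have Ipb: "I * (1 - 1 / (2 * L)) \<le> Ip"
      unfolding Ip_def I_def[symmetric] using f1 L2 by (simp add: algebra_simps)
    have LL: "1 - 1 / (2 * L) \<ge> 3/4" using L2 by (simp add: field_simps)
    have "0 < I * (1 - 1 / (2 * L))" using I LL by (intro mult_pos_pos) auto
    then have Ippos: "0 < Ip" using Ipb by linarith
    define ell where "ell = log 2 (1 / \<delta>)"
    have ell: "1 \<le> ell" unfolding ell_def using d0 d1 by (simp add: field_simps)
    define X where "X = L + 3 + ell + cp"
    have X0: "0 \<le> X" using L2 ell cp by (simp add: X_def)
    have Phib: "PhiV 1 [] \<le> X"
    proof -
      have "real (2^j) \<le> real (2 * n)" using j(2) by (rule of_nat_mono)
      then have jr: "(2::real)^j \<le> 2 * real n" by simp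
      have "1 \<le> n + 2^j" using n4 by simp
      then have Dr: "real D = real n + 2^j - 1" unfolding D_def by (simp add: of_nat_diff)
      have "(1::real) \<le> 2^j" by simp
      then have Dn: "real D - 1 \<le> 3 * real n" "1 \<le> real D - 1"
        using jr Dr n4 by linarith+
      have "log 2 (real D - 1) \<le> log 2 (3 * real n)"
        using Dn n4 by (subst log_le_cancel_iff) auto
      also have "\<dots> = log 2 3 + L" unfolding L_def using n4 by (simp add: log_mult_pos)
      also have "log 2 3 \<le> (2::real)" using log_of_power_le[of 3 2 2] by simp
      finally have a: "log 2 (real D - 1) \<le> 2 + L" by simp
      have "log 2 ((1 - eps) / eps) \<le> log 2 (1 / eps)"
        using d0 d1 by (subst log_le_cancel_iff) (auto simp: eps_def field_simps)
      also have "1 / eps = 2 * (1 / \<delta>)" by (simp add: eps_def)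
      also have "log 2 (2 * (1 / \<delta>)) = 1 + ell"
        unfolding ell_def using d0 log_mult_pos[of 2 "1 / \<delta>" 2] by simp
      finally have b: "K0 \<le> 1 + ell + cp" by (simp add: K0_def cp_def)
      show ?thesis unfolding PhiV_start using a b X0 by (simp add: X_def)
    qed
    have main: "PhiV 1 [] / Ip \<le> (log 2 n + C * log 2 (log 2 n) + C * log 2 (1 / \<delta>)) / capacity p"
    proof -
      have LLg: "1 \<le> log 2 L" using L2 by simp
      have "PhiV 1 [] / Ip \<le> X / Ip" using Phib Ippos by (simp add: divide_right_mono)
      also have "\<dots> \<le> X / (I * (1 - 1 / (2 * L)))"
        using Ipb X0 \<open>0 < I * (1 - 1 / (2 * L))\<close> Ippos by (intro divide_left_mono) auto
      also have "\<dots> = (X / (1 - 1 / (2 * L))) / I" by simp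
      also have "X / (1 - 1 / (2 * L)) \<le> X + X / L"
      proof -
        have "X \<le> (X + X / L) * (1 - 1 / (2 * L))"
        proof -
          have "(X + X / L) * (1 - 1 / (2 * L)) = X + X / (2 * L) * (1 - 1 / L)"
            using L2 by (simp add: field_simps)
          moreover have "0 \<le> X / (2 * L) * (1 - 1 / L)"
          proof -
            have "0 \<le> 1 - 1 / L" using L2 by (simp add: field_simps)
            moreover have "0 \<le> X / (2 * L)" using X0 L2 by simp
            ultimately show ?thesis by (rule mult_nonneg_nonneg[rotated])
          qed
          ultimately show ?thesis by simp
        qed
        moreover have c: "0 < 1 - 1 / (2 * L)" using LL by linarith
        ultimately show ?thesis by (simp only: pos_divide_le_eq[OF c])
      qed
      also have "X + X / L \<le> L + C * log 2 L + C * ell"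
      proof -
        have x1: "X / L = 1 + (3 + ell + cp) / L" using L2 by (simp add: X_def field_simps)
        have x2: "(3 + ell + cp) / L \<le> (3 + ell + cp) / 2"
          using L2 ell cp by (intro divide_left_mono) auto
        have xl: "X / L \<le> 1 + (3 + ell + cp) / 2" using x1 x2 by linarith
        have gen: "\<And>y. y \<le> 1 + (3 + ell + cp) / 2 \<Longrightarrow> X + y \<le> L + (11/2 + 3/2 * cp) + 3/2 * ell"
          unfolding X_def by (simp add: field_simps)
        have "X + X / L \<le> L + (11/2 + 3/2 * cp) + 3/2 * ell" by (rule gen[OF xl])
        moreover have "11/2 + 3/2 * cp \<le> C * log 2 L"
        proof -
          have "11/2 + 3/2 * cp \<le> C * 1" using cp by (simp add: C_def)
          also have "\<dots> \<le> C * log 2 L" using LLg cp by (intro mult_left_mono) (auto simp: C_def)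
          finally show ?thesis .
        qed
        moreover have "3/2 * ell \<le> C * ell" using ell cp by (intro mult_right_mono) (auto simp: C_def)
        ultimately show ?thesis by simp
      qed
      finally show ?thesis using I by (simp add: divide_right_mono L_def ell_def I_def)
    qed
    show "\<exists>s :: bool list \<Rightarrow> action. \<forall>v \<in> {1..n}.
              halt_prob p s v = 1 \<and>
              success_prob p s v \<ge> ennreal (1 - \<delta>) \<and>
              expected_queries p s v \<le>
                ennreal ((log 2 n + C * log 2 (log 2 n) + C * log 2 (1 / \<delta>)) / capacity p)"
    proof (intro exI[of _ "S j"] ballI conjI)
      fix v assume v: "v \<in> {1..n}"
      have v': "1 \<le> v" "v + 2^j \<le> D + 1" using v j by (auto simp: D_def)
      note mb = main_bounds[OF v' j(3) Ippos]
      show "halt_prob p (S j) v = 1" by (rule mb(1))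
      have "(1/2) ^ j * real D \<le> 2"
      proof -
        have "real (n + 2^j - 1) \<le> real (2 * 2 ^ j)" using j(1) by (intro of_nat_mono) simp
        then have "real D \<le> 2 * 2 ^ j" by (simp add: D_def)
        then show ?thesis by (simp add: field_simps)
      qed
      then have "(1/2) ^ j * eps * real D \<le> \<delta>"
        using d0 by (simp add: eps_def field_simps)
      then have "ennreal (1 - \<delta>) \<le> ennreal (1 - (1/2) ^ j * eps * real D)"
        by (intro ennreal_leI) simp
      then show "ennreal (1 - \<delta>) \<le> success_prob p (S j) v" using mb(2) by (rule order_trans)
      show "expected_queries p (S j) v \<le> ennreal ((log 2 n + C * log 2 (log 2 n) + C * log 2 (1 / \<delta>)) / capacity p)"
        using mb(3) ennreal_leI[OF main] by (rule order_trans)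
    qed
  qed
qed

end
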